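(* In $\mathbf{MetCH_{sep}}$, the pushout of a regular monomorphism along any morphism is a regular monomorphism.
   Context: A metric on a set $X$ is a map $d\colon X\times X\to[0,\infty]$ with $d(x,x)=0$ and $d(x,z)\le d(x,y)+d(y,z)$ (not necessarily symmetric, $\infty$ allowed); separated means $d(x,y)=0=d(y,x)$ implies $x=y$. A separated metric compact Hausdorff space is a compact Hausdorff space with a separated metric $d\colon X\times X\to[0,\infty]$ continuous with respect to the upper topology on $[0,\infty]$ (open sets $]u,\infty]$, plus $\emptyset$ and $[0,\infty]$). $\mathbf{MetCH_{sep}}$ has these spaces as objects and continuous non-expansive maps ($d_Y(f(x),f(y))\le d_X(x,y)$) as morphisms. *)

theory Defs
  imports "HOL-Analysis.Analysis"
begin

text \<open>Objects of MetCH_sep: a compact Hausdorff space X (abstract topology, carrier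
  topspace X) with a separated (possibly asymmetric, possibly infinite) metric
  d with values in [0,\<infinity>] (type ennreal), continuous w.r.t. the upper topology on
  [0,\<infinity>] whose open sets are ]u,\<infinity>], i.e. every set {d > u} is open in X \<times> X.\<close>

definition MetCH_sep :: "'a topology \<Rightarrow> ('a \<Rightarrow> 'a \<Rightarrow> ennreal) \<Rightarrow> bool" where
  "MetCH_sep X d \<longleftrightarrow>
     compact_space X \<and> Hausdorff_space X \<and>
     (\<forall>x\<in>topspace X. d x x = 0) \<and>
     (\<forall>x\<in>topspace X. \<forall>y\<in>topspace X. \<forall>z\<in>topspace X. d x z \<le> d x y + d y z) \<and>
     (\<forall>x\<in>topspace X. \<forall>y\<in>topspace X. d x y = 0 \<and> d y x = 0 \<longrightarrow> x = y) \<and>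
     (\<forall>u. openin (prod_topology X X)
            {p \<in> topspace X \<times> topspace X. u < d (fst p) (snd p)})"

definition mor :: "'a topology \<Rightarrow> ('a \<Rightarrow> 'a \<Rightarrow> ennreal) \<Rightarrow>
                   'b topology \<Rightarrow> ('b \<Rightarrow> 'b \<Rightarrow> ennreal) \<Rightarrow> ('a \<Rightarrow> 'b) \<Rightarrow> bool" where
  "mor X dX Y dY f \<longleftrightarrow> continuous_map X Y f \<and>
     (\<forall>x\<in>topspace X. \<forall>y\<in>topspace X. dY (f x) (f y) \<le> dX x y)"

text \<open>m : A \<rightarrow> B is an equalizer of p, q : B \<rightarrow> E, where the universal property is
  tested against all objects W whose points live in the type 'w.
  Morphisms are identified when they agree on the carrier.\<close>

definition is_equalizer ::
  "'w itself \<Rightarrow> 'a topology \<Rightarrow> ('a \<Rightarrow> 'a \<Rightarrow> ennreal) \<Rightarrow>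
   'b topology \<Rightarrow> ('b \<Rightarrow> 'b \<Rightarrow> ennreal) \<Rightarrow> 'e topology \<Rightarrow> ('e \<Rightarrow> 'e \<Rightarrow> ennreal) \<Rightarrow>
   ('a \<Rightarrow> 'b) \<Rightarrow> ('b \<Rightarrow> 'e) \<Rightarrow> ('b \<Rightarrow> 'e) \<Rightarrow> bool" where
  "is_equalizer _ A dA B dB E dE m p q \<longleftrightarrow>
     mor A dA B dB m \<and> mor B dB E dE p \<and> mor B dB E dE q \<and>
     (\<forall>a\<in>topspace A. p (m a) = q (m a)) \<and>
     (\<forall>(W::'w topology) dW w.
        MetCH_sep W dW \<and> mor W dW B dB w \<and> (\<forall>x\<in>topspace W. p (w x) = q (w x)) \<longrightarrow>
        (\<exists>v. mor W dW A dA v \<and> (\<forall>x\<in>topspace W. m (v x) = w x)) \<and>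
        (\<forall>v v'. mor W dW A dA v \<and> (\<forall>x\<in>topspace W. m (v x) = w x) \<and>
                mor W dW A dA v' \<and> (\<forall>x\<in>topspace W. m (v' x) = w x) \<longrightarrow>
                (\<forall>x\<in>topspace W. v x = v' x)))"

definition is_pushout ::
  "'z itself \<Rightarrow> 'a topology \<Rightarrow> ('a \<Rightarrow> 'a \<Rightarrow> ennreal) \<Rightarrow>
   'b topology \<Rightarrow> ('b \<Rightarrow> 'b \<Rightarrow> ennreal) \<Rightarrow> 'c topology \<Rightarrow> ('c \<Rightarrow> 'c \<Rightarrow> ennreal) \<Rightarrow>
   'd topology \<Rightarrow> ('d \<Rightarrow> 'd \<Rightarrow> ennreal) \<Rightarrow>
   ('a \<Rightarrow> 'b) \<Rightarrow> ('a \<Rightarrow> 'c) \<Rightarrow> ('b \<Rightarrow> 'd) \<Rightarrow> ('c \<Rightarrow> 'd) \<Rightarrow> bool" where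
  "is_pushout _ A dA B dB C dC D dD m f g n \<longleftrightarrow>
     mor A dA B dB m \<and> mor A dA C dC f \<and> mor B dB D dD g \<and> mor C dC D dD n \<and>
     (\<forall>a\<in>topspace A. g (m a) = n (f a)) \<and>
     (\<forall>(Z::'z topology) dZ h k.
        MetCH_sep Z dZ \<and> mor B dB Z dZ h \<and> mor C dC Z dZ k \<and>
        (\<forall>a\<in>topspace A. h (m a) = k (f a)) \<longrightarrow>
        (\<exists>u. mor D dD Z dZ u \<and> (\<forall>b\<in>topspace B. u (g b) = h b) \<and>
             (\<forall>c\<in>topspace C. u (n c) = k c)) \<and>
        (\<forall>u u'. mor D dD Z dZ u \<and> (\<forall>b\<in>topspace B. u (g b) = h b) \<and>
                 (\<forall>c\<in>topspace C. u (n c) = k c) \<and>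
                 mor D dD Z dZ u' \<and> (\<forall>b\<in>topspace B. u' (g b) = h b) \<and>
                 (\<forall>c\<in>topspace C. u' (n c) = k c) \<longrightarrow>
                 (\<forall>x\<in>topspace D. u x = u' x)))"

end

theory Submission
  imports Defs
begin

definition lsc :: "'a topology \<Rightarrow> ('a \<Rightarrow> ennreal) \<Rightarrow> bool" where
  "lsc X \<phi> \<longleftrightarrow> (\<forall>u. openin X {x \<in> topspace X. u < \<phi> x})"

lemma lsc_compose:
  assumes "continuous_map X Y g" "lsc Y \<phi>"
  shows "lsc X (\<lambda>x. \<phi> (g x))"
  unfolding lsc_def
proof
  fix u
  have "openin X {x \<in> topspace X. g x \<in> {y \<in> topspace Y. u < \<phi> y}}"
    using assms openin_continuous_map_preimage unfolding lsc_def by blast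
  moreover have "{x \<in> topspace X. g x \<in> {y \<in> topspace Y. u < \<phi> y}} = {x \<in> topspace X. u < \<phi> (g x)}"
    using assms(1) by (auto simp: continuous_map_def)
  ultimately show "openin X {x \<in> topspace X. u < \<phi> (g x)}" by simp
qed

lemma lsc_min:
  assumes "lsc X \<phi>" "lsc X \<psi>"
  shows "lsc X (\<lambda>x. min (\<phi> x) (\<psi> x))"
  unfolding lsc_def
proof
  fix u
  have "{x \<in> topspace X. u < min (\<phi> x) (\<psi> x)} = {x \<in> topspace X. u < \<phi> x} \<inter> {x \<in> topspace X. u < \<psi> x}"
    by auto
  then show "openin X {x \<in> topspace X. u < min (\<phi> x) (\<psi> x)}"
    using assms unfolding lsc_def by auto
qed

lemma lsc_const: "lsc X (\<lambda>x. c)"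
  unfolding lsc_def
proof
  fix u
  show "openin X {x \<in> topspace X. u < c}"
    by (cases "u < c") auto
qed

lemma ennreal_fin_cases: fixes a :: ennreal assumes at: "a \<noteq> top" obtains x where "a = ennreal x" "x \<ge> 0"
  using at by (cases a rule: ennreal_cases) auto

lemma real_split_aux: fixes x y w :: real assumes xp: "x > 0" and yp: "y > 0" and wl: "w < x + y" and w: "w \<ge> 0"
  shows "\<exists>e>0. e < x \<and> e < y \<and> ennreal w < ennreal (x - e) + ennreal (y - e)"
proof -
  define e where "e = min (min x y) (x + y - w) / 3"
  have ep: "e > 0" using xp yp wl by (simp add: e_def)
  have m3: "3 * e = min (min x y) (x + y - w)" by (simp add: e_def)
  have m1: "min (min x y) (x + y - w) \<le> x" "min (min x y) (x + y - w) \<le> y"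
    "min (min x y) (x + y - w) \<le> x + y - w" by auto
  have ex: "e < x" "e < y" "2 * e < x + y - w" using m1 m3 ep by linarith+
  have "ennreal w < ennreal ((x - e) + (y - e))"
    using ex ep w by (subst ennreal_less_iff) linarith+
  also have "ennreal ((x - e) + (y - e)) = ennreal (x - e) + ennreal (y - e)"
    using ex by (intro ennreal_plus) linarith+
  finally show ?thesis using ex ep by blast
qed

lemma ennreal_split_less:
  fixes u a b :: ennreal
  assumes uab: "u < a + b"
  shows "\<exists>a' b'. u < a' + b' \<and> (a' = 0 \<or> a' < a) \<and> (b' = 0 \<or> b' < b)"
proof -
  have ut: "u \<noteq> top" using uab by auto
  show ?thesis
  proof (cases "a = 0")
    case True
    then have "u < b" using uab by simp
    then obtain b' where "u < b'" "b' < b" using dense by blast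
    then show ?thesis by (intro exI[of _ 0] exI[of _ b']) simp
  next
    case a0: False
    show ?thesis
    proof (cases "b = 0")
      case True
      then have "u < a" using uab by simp
      then obtain a' where "u < a'" "a' < a" using dense by blast
      then show ?thesis by (intro exI[of _ a'] exI[of _ 0]) simp
    next
      case b0: False
      show ?thesis
      proof (cases "a = top")
        case True
        have "u < top" using ut by (simp add: less_top)
        then obtain a' where "u < a'" "a' < top" using dense by blast
        then show ?thesis using True by (intro exI[of _ a'] exI[of _ 0]) simp
      next
        case at: False
        show ?thesis
        proof (cases "b = top")
          case True
          have "u < top" using ut by (simp add: less_top)
          then obtain b' where "u < b'" "b' < top" using dense by blast
          then show ?thesis using True by (intro exI[of _ 0] exI[of _ b']) simp
        next
          case bt: False
          obtain x where x: "a = ennreal x" "x \<ge> 0" using at by (rule ennreal_fin_cases)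
          obtain y where y: "b = ennreal y" "y \<ge> 0" using bt by (rule ennreal_fin_cases)
          obtain w where w: "u = ennreal w" "w \<ge> 0" using ut by (rule ennreal_fin_cases)
          have xp: "x > 0" using a0 x by (auto simp: less_le)
          have yp: "y > 0" using b0 y by (auto simp: less_le)
          have wl: "w < x + y" using uab x y w by (metis ennreal_less_iff ennreal_plus add_nonneg_nonneg)
          obtain e where e: "e > 0" "e < x" "e < y" "ennreal w < ennreal (x - e) + ennreal (y - e)"
            using real_split_aux[OF xp yp wl w(2)] by blast
          have "ennreal (x - e) < a" using e x by (simp add: ennreal_less_iff)
          moreover have "ennreal (y - e) < b" using e y by (simp add: ennreal_less_iff)
          ultimately show ?thesis using e(4) w by blast
        qed
      qed
    qed
  qed
qed

lemma lsc_add: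
  assumes "lsc X \<phi>" "lsc X \<psi>"
  shows "lsc X (\<lambda>x. \<phi> x + \<psi> x)"
  unfolding lsc_def
proof
  fix u
  show "openin X {x \<in> topspace X. u < \<phi> x + \<psi> x}"
  proof (subst openin_subopen, intro ballI)
    fix x assume x: "x \<in> {x \<in> topspace X. u < \<phi> x + \<psi> x}"
    then obtain a' b' where ab: "u < a' + b'" "a' = 0 \<or> a' < \<phi> x" "b' = 0 \<or> b' < \<psi> x"
      using ennreal_split_less by blast
    define T1 where "T1 = (if a' = 0 then topspace X else {y \<in> topspace X. a' < \<phi> y})"
    define T2 where "T2 = (if b' = 0 then topspace X else {y \<in> topspace X. b' < \<psi> y})"
    have o: "openin X (T1 \<inter> T2)" using assms unfolding T1_def T2_def lsc_def by auto
    have i: "x \<in> T1 \<inter> T2" using x ab unfolding T1_def T2_def by auto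
    have s: "T1 \<inter> T2 \<subseteq> {x \<in> topspace X. u < \<phi> x + \<psi> x}"
    proof
      fix y assume y: "y \<in> T1 \<inter> T2"
      have "a' \<le> \<phi> y" using y unfolding T1_def by (auto split: if_splits)
      moreover have "b' \<le> \<psi> y" using y unfolding T2_def by (auto split: if_splits)
      ultimately have "a' + b' \<le> \<phi> y + \<psi> y" by (rule add_mono)
      then show "y \<in> {x \<in> topspace X. u < \<phi> x + \<psi> x}"
        using ab(1) y unfolding T1_def by (auto split: if_splits)
    qed
    show "\<exists>T. openin X T \<and> x \<in> T \<and> T \<subseteq> {x \<in> topspace X. u < \<phi> x + \<psi> x}"
      using o i s by blast
  qed
qed

lemma lsc_INF:
  assumes l: "lsc (prod_topology P T) (\<lambda>q. \<Phi> (fst q) (snd q))" and K: "compactin T K"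
  shows "lsc P (\<lambda>p. INF t\<in>K. \<Phi> p t)"
  unfolding lsc_def
proof
  fix u
  show "openin P {p \<in> topspace P. u < (INF t\<in>K. \<Phi> p t)}"
  proof (subst openin_subopen, intro ballI)
    fix p0 assume p0: "p0 \<in> {p \<in> topspace P. u < (INF t\<in>K. \<Phi> p t)}"
    then have p0P: "p0 \<in> topspace P" and p0u: "u < (INF t\<in>K. \<Phi> p0 t)" by auto
    obtain v where v: "u < v" "v < (INF t\<in>K. \<Phi> p0 t)" using dense[OF p0u] by (elim exE conjE)
    define W where "W = {q \<in> topspace (prod_topology P T). v < \<Phi> (fst q) (snd q)}"
    have W: "openin (prod_topology P T) W" using l unfolding lsc_def W_def by blast
    have Ksub: "K \<subseteq> topspace T" using K by (rule compactin_subset_topspace)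
    have sub: "{p0} \<times> K \<subseteq> W"
    proof
      fix q assume q: "q \<in> {p0} \<times> K"
      then have qK: "snd q \<in> K" and qp: "fst q = p0" by auto
      have "(INF t\<in>K. \<Phi> p0 t) \<le> \<Phi> p0 (snd q)" using qK by (rule INF_lower)
      then have "v < \<Phi> (fst q) (snd q)" using v(2) qp by simp
      moreover have "q \<in> topspace (prod_topology P T)" using q p0P Ksub by auto
      ultimately show "q \<in> W" unfolding W_def by simp
    qed
    obtain U V where UV: "openin P U" "openin T V" "p0 \<in> U" "K \<subseteq> V" "U \<times> V \<subseteq> W"
      using tube_lemma_right[OF W K p0P sub] by (elim exE conjE)
    have "U \<subseteq> {p \<in> topspace P. u < (INF t\<in>K. \<Phi> p t)}"
    proof
      fix p assume p: "p \<in> U"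
      have "v \<le> (INF t\<in>K. \<Phi> p t)"
      proof (rule INF_greatest)
        fix t assume "t \<in> K"
        then have "(p, t) \<in> U \<times> V" using UV(4) p by blast
        then have "(p, t) \<in> W" by (rule subsetD[OF UV(5)])
        then show "v \<le> \<Phi> p t" unfolding W_def by (simp add: less_imp_le)
      qed
      then have "u < (INF t\<in>K. \<Phi> p t)" by (rule order.strict_trans2[OF v(1)])
      moreover have "p \<in> topspace P" using UV(1) p openin_subset by blast
      ultimately show "p \<in> {p \<in> topspace P. u < (INF t\<in>K. \<Phi> p t)}" by simp
    qed
    then show "\<exists>T. openin P T \<and> p0 \<in> T \<and> T \<subseteq> {p \<in> topspace P. u < (INF t\<in>K. \<Phi> p t)}"
      using UV(1,3) by blast
  qed
qed

lemma ennreal_pos_inverse: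
  fixes y :: ennreal
  assumes "0 < y"
  shows "\<exists>n. ennreal (1 / real (Suc n)) < y"
proof (cases "y = top")
  case True then show ?thesis by auto
next
  case False
  then obtain r where r: "y = ennreal r" "r \<ge> 0" by (rule ennreal_fin_cases)
  then have "r > 0" using assms by (auto simp: less_le)
  then obtain n where "n > 0" "inverse (real n) < r" using ex_inverse_of_nat_less by blast
  then have "1 / real (Suc (n - 1)) < r" by (simp add: divide_inverse)
  then show ?thesis using r by (intro exI[of _ "n - 1"]) (simp add: ennreal_less_iff)
qed

lemma INF_pos:
  assumes l: "lsc T \<Psi>" and K: "compactin T K" and pos: "\<forall>t\<in>K. 0 < \<Psi> t"
  shows "0 < (INF t\<in>K. \<Psi> t)"
proof -
  define S where "S = (\<lambda>n. {t \<in> topspace T. ennreal (1 / real (Suc n)) < \<Psi> t})"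
  have oS: "\<forall>U \<in> range S. openin T U" using l unfolding lsc_def S_def by auto
  have Ksub: "K \<subseteq> topspace T" using K compactin_subset_topspace by blast
  have cov: "K \<subseteq> \<Union>(range S)"
  proof
    fix t assume t: "t \<in> K"
    then obtain n where "ennreal (1 / real (Suc n)) < \<Psi> t" using pos ennreal_pos_inverse by blast
    then show "t \<in> \<Union>(range S)" using t Ksub unfolding S_def by auto
  qed
  have "\<forall>\<U>. (\<forall>U\<in>\<U>. openin T U) \<and> K \<subseteq> \<Union>\<U> \<longrightarrow> (\<exists>\<F>. finite \<F> \<and> \<F> \<subseteq> \<U> \<and> K \<subseteq> \<Union>\<F>)"
    using K unfolding compactin_def by (rule conjunct2)
  then have "(\<forall>U\<in>range S. openin T U) \<and> K \<subseteq> \<Union>(range S) \<longrightarrow> (\<exists>\<F>. finite \<F> \<and> \<F> \<subseteq> range S \<and> K \<subseteq> \<Union>\<F>)"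
    by (rule spec)
  then obtain F where F: "finite F" "F \<subseteq> range S" "K \<subseteq> \<Union>F" using oS cov by blast
  obtain N where N: "finite N" "F = S ` N" using finite_subset_image[OF F(1) F(2)] by blast
  show ?thesis
  proof (cases "N = {}")
    case True
    then have "K = {}" using F N by auto
    then show ?thesis by simp
  next
    case False
    define n0 where "n0 = Max N"
    have mono: "S n \<subseteq> S n0" if "n \<in> N" for n
    proof -
      have "n \<le> n0" using that N(1) unfolding n0_def by simp
      then have "1 / real (Suc n0) \<le> 1 / real (Suc n)" by (simp add: frac_le)
      then have e: "ennreal (1 / real (Suc n0)) \<le> ennreal (1 / real (Suc n))" by (rule ennreal_leI)
      show ?thesis
      proof
        fix t assume "t \<in> S n"
        then have "t \<in> topspace T" "ennreal (1 / real (Suc n)) < \<Psi> t" unfolding S_def by blast+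
        then show "t \<in> S n0" unfolding S_def using order.strict_trans1[OF e] by blast
      qed
    qed
    have "K \<subseteq> S n0" using F N mono by blast
    then have "\<forall>t\<in>K. ennreal (1 / real (Suc n0)) \<le> \<Psi> t"
      unfolding S_def using less_imp_le by blast
    then have "ennreal (1 / real (Suc n0)) \<le> (INF t\<in>K. \<Psi> t)"
      by (simp add: le_INF_iff)
    moreover have "0 < ennreal (1 / real (Suc n0))" by simp
    ultimately show ?thesis by (rule less_le_trans[rotated])
  qed
qed


definition sim :: "('z \<Rightarrow> 'z \<Rightarrow> ennreal) \<Rightarrow> 'z \<Rightarrow> 'z \<Rightarrow> bool" where
  "sim \<delta> x y \<longleftrightarrow> \<delta> x y = 0 \<and> \<delta> y x = 0"

definition qrep :: "'z topology \<Rightarrow> ('z \<Rightarrow> 'z \<Rightarrow> ennreal) \<Rightarrow> 'z \<Rightarrow> 'z" where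
  "qrep X \<delta> x = (SOME y. y \<in> topspace X \<and> sim \<delta> y x)"

definition qtop :: "'z topology \<Rightarrow> ('z \<Rightarrow> 'z \<Rightarrow> ennreal) \<Rightarrow> 'z topology" where
  "qtop X \<delta> = topology (\<lambda>U. U \<subseteq> qrep X \<delta> ` topspace X \<and> openin X {x \<in> topspace X. qrep X \<delta> x \<in> U})"

locale pmet =
  fixes X :: "'z topology" and \<delta> :: "'z \<Rightarrow> 'z \<Rightarrow> ennreal"
  assumes cpt: "compact_space X" and haus: "Hausdorff_space X"
    and refl: "\<And>x. x \<in> topspace X \<Longrightarrow> \<delta> x x = 0"
    and tri: "\<And>x y z. x \<in> topspace X \<Longrightarrow> y \<in> topspace X \<Longrightarrow> z \<in> topspace X \<Longrightarrow> \<delta> x z \<le> \<delta> x y + \<delta> y z"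
    and lscd: "lsc (prod_topology X X) (\<lambda>p. \<delta> (fst p) (snd p))"
begin

abbreviation "rep \<equiv> qrep X \<delta>"
abbreviation "Q \<equiv> qtop X \<delta>"

lemma sim_refl: "x \<in> topspace X \<Longrightarrow> sim \<delta> x x"
  by (simp add: sim_def refl)

lemma sim_sym: "sim \<delta> x y \<Longrightarrow> sim \<delta> y x"
  by (auto simp: sim_def)

lemma sim_trans:
  assumes "x \<in> topspace X" "y \<in> topspace X" "z \<in> topspace X" "sim \<delta> x y" "sim \<delta> y z"
  shows "sim \<delta> x z"
proof -
  have "\<delta> x z \<le> \<delta> x y + \<delta> y z" "\<delta> z x \<le> \<delta> z y + \<delta> y x" using tri assms by auto
  then show ?thesis using assms(4,5) by (auto simp: sim_def)
qed

lemma rep_in: assumes "x \<in> topspace X" shows "rep x \<in> topspace X" "sim \<delta> (rep x) x"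
proof -
  have "\<exists>y. y \<in> topspace X \<and> sim \<delta> y x" using assms sim_refl by blast
  then have "rep x \<in> topspace X \<and> sim \<delta> (rep x) x" unfolding qrep_def by (rule someI_ex)
  then show "rep x \<in> topspace X" "sim \<delta> (rep x) x" by auto
qed

lemma rep_eq:
  assumes "x \<in> topspace X" "y \<in> topspace X" "sim \<delta> x y"
  shows "rep x = rep y"
proof -
  have "(\<lambda>z. z \<in> topspace X \<and> sim \<delta> z x) = (\<lambda>z. z \<in> topspace X \<and> sim \<delta> z y)"
  proof (rule ext, rule iffI)
    fix z assume "z \<in> topspace X \<and> sim \<delta> z x"
    then show "z \<in> topspace X \<and> sim \<delta> z y" using sim_trans[of z x y] assms by blast
  next
    fix z assume z: "z \<in> topspace X \<and> sim \<delta> z y"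
    have "sim \<delta> y x" using assms(3) by (rule sim_sym)
    then show "z \<in> topspace X \<and> sim \<delta> z x" using sim_trans[of z y x] assms z by blast
  qed
  then show ?thesis unfolding qrep_def by simp
qed

lemma delta_rep:
  assumes x: "x \<in> topspace X" and y: "y \<in> topspace X"
  shows "\<delta> (rep x) (rep y) = \<delta> x y"
proof (rule antisym)
  have a: "\<delta> (rep x) x = 0" "\<delta> x (rep x) = 0" "\<delta> (rep y) y = 0" "\<delta> y (rep y) = 0"
    using rep_in x y by (auto simp: sim_def)
  have "\<delta> (rep x) (rep y) \<le> \<delta> (rep x) x + \<delta> x (rep y)" using tri rep_in x y by blast
  also have "\<delta> x (rep y) \<le> \<delta> x y + \<delta> y (rep y)" using tri rep_in x y by blast
  finally show "\<delta> (rep x) (rep y) \<le> \<delta> x y" using a by (simp add: add_mono)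
  have "\<delta> x y \<le> \<delta> x (rep x) + \<delta> (rep x) y" using tri rep_in x y by blast
  also have "\<delta> (rep x) y \<le> \<delta> (rep x) (rep y) + \<delta> (rep y) y" using tri rep_in x y by blast
  finally show "\<delta> x y \<le> \<delta> (rep x) (rep y)" using a by (simp add: add_mono)
qed

lemma rep_eq_iff:
  assumes "x \<in> topspace X" "y \<in> topspace X"
  shows "rep x = rep y \<longleftrightarrow> sim \<delta> x y"
proof
  assume "rep x = rep y"
  then have "sim \<delta> (rep x) (rep y)" using rep_in assms sim_refl by metis
  then show "sim \<delta> x y" using delta_rep assms by (auto simp: sim_def)
qed (use rep_eq assms in auto)

lemma istop: "istopology (\<lambda>U. U \<subseteq> rep ` topspace X \<and> openin X {x \<in> topspace X. rep x \<in> U})"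
proof -
  have 1: "S \<inter> T \<subseteq> rep ` topspace X \<and> openin X {x \<in> topspace X. rep x \<in> S \<inter> T}"
    if S: "S \<subseteq> rep ` topspace X \<and> openin X {x \<in> topspace X. rep x \<in> S}"
    and T: "T \<subseteq> rep ` topspace X \<and> openin X {x \<in> topspace X. rep x \<in> T}" for S T
  proof -
    have "{x \<in> topspace X. rep x \<in> S \<inter> T} = {x \<in> topspace X. rep x \<in> S} \<inter> {x \<in> topspace X. rep x \<in> T}" by auto
    then show ?thesis using S T by auto
  qed
  have 2: "\<Union>K \<subseteq> rep ` topspace X \<and> openin X {x \<in> topspace X. rep x \<in> \<Union>K}"
    if K: "\<forall>S\<in>K. S \<subseteq> rep ` topspace X \<and> openin X {x \<in> topspace X. rep x \<in> S}" for K
  proof -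
    have "{x \<in> topspace X. rep x \<in> \<Union>K} = \<Union>((\<lambda>S. {x \<in> topspace X. rep x \<in> S}) ` K)" by auto
    then show ?thesis using K by auto
  qed
  show ?thesis unfolding istopology_def using 1 2 by blast
qed

lemma openin_Q: "openin Q U \<longleftrightarrow> U \<subseteq> rep ` topspace X \<and> openin X {x \<in> topspace X. rep x \<in> U}"
  unfolding qtop_def using istop by simp

lemma topspace_Q: "topspace Q = rep ` topspace X"
proof -
  have "{x \<in> topspace X. rep x \<in> rep ` topspace X} = topspace X" by auto
  then have "openin Q (rep ` topspace X)" unfolding openin_Q by auto
  then have "rep ` topspace X \<subseteq> topspace Q" by (rule openin_subset)
  moreover have "topspace Q \<subseteq> rep ` topspace X" using openin_Q openin_topspace by blast
  ultimately show ?thesis by blast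
qed

lemma cont_rep: "continuous_map X Q rep"
  unfolding continuous_map_def
proof (intro conjI allI impI)
  show "rep \<in> topspace X \<rightarrow> topspace Q" using topspace_Q by auto
  fix U assume "openin Q U"
  then show "openin X {x \<in> topspace X. rep x \<in> U}" using openin_Q by blast
qed

lemma R_closed: "closedin (prod_topology X X) {p \<in> topspace X \<times> topspace X. sim \<delta> (fst p) (snd p)}"
proof -
  have o1: "openin (prod_topology X X) {p \<in> topspace (prod_topology X X). 0 < \<delta> (fst p) (snd p)}"
    using lscd unfolding lsc_def by blast
  have c: "continuous_map (prod_topology X X) (prod_topology X X) (\<lambda>p. (snd p, fst p))"
    by (intro continuous_map_pairedI continuous_map_fst continuous_map_snd)
  have "lsc (prod_topology X X) (\<lambda>p. \<delta> (fst (snd p, fst p)) (snd (snd p, fst p)))"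
    by (rule lsc_compose[OF c lscd])
  then have o2: "openin (prod_topology X X) {p \<in> topspace (prod_topology X X). 0 < \<delta> (snd p) (fst p)}"
    unfolding lsc_def by auto
  have eq: "{p \<in> topspace X \<times> topspace X. sim \<delta> (fst p) (snd p)} =
     topspace (prod_topology X X) - ({p \<in> topspace (prod_topology X X). 0 < \<delta> (fst p) (snd p)} \<union>
        {p \<in> topspace (prod_topology X X). 0 < \<delta> (snd p) (fst p)})"
    by (auto simp: sim_def)
  have "closedin (prod_topology X X) (topspace (prod_topology X X) - ({p \<in> topspace (prod_topology X X). 0 < \<delta> (fst p) (snd p)} \<union>
        {p \<in> topspace (prod_topology X X). 0 < \<delta> (snd p) (fst p)}))"
    by (intro closedin_diff closedin_topspace openin_Un o1 o2)
  then show ?thesis by (simp only: eq)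
qed

definition "sat K = {y \<in> topspace X. \<exists>x\<in>K. sim \<delta> x y}"

lemma sat_closed:
  assumes K: "closedin X K"
  shows "closedin X (sat K)"
proof -
  have Ksub: "K \<subseteq> topspace X" using K closedin_subset by blast
  have c1: "closedin (prod_topology X X) ((K \<times> topspace X) \<inter> {p \<in> topspace X \<times> topspace X. sim \<delta> (fst p) (snd p)})"
    using K R_closed by (intro closedin_Int) (auto simp: closedin_prod_Times_iff)
  have "closed_map (prod_topology X X) X snd" using closed_map_snd cpt by blast
  then have "closedin X (snd ` ((K \<times> topspace X) \<inter> {p \<in> topspace X \<times> topspace X. sim \<delta> (fst p) (snd p)}))"
    using c1 unfolding closed_map_def by blast
  moreover have "snd ` ((K \<times> topspace X) \<inter> {p \<in> topspace X \<times> topspace X. sim \<delta> (fst p) (snd p)}) = sat K"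
    unfolding sat_def using Ksub by force
  ultimately show ?thesis by simp
qed

definition "shr U = topspace X - sat (topspace X - U)"

lemma shr_open: "openin X U \<Longrightarrow> openin X (shr U)"
  unfolding shr_def by (intro openin_diff sat_closed) auto

lemma shr_sub: "shr U \<subseteq> U"
proof
  fix x assume x: "x \<in> shr U"
  show "x \<in> U"
  proof (rule ccontr)
    assume "x \<notin> U"
    moreover have "x \<in> topspace X" using x unfolding shr_def by blast
    ultimately have "x \<in> sat (topspace X - U)" unfolding sat_def using sim_refl by blast
    then show False using x unfolding shr_def by blast
  qed
qed

lemma shr_sat:
  assumes x: "x \<in> shr U" and y: "y \<in> topspace X" and s: "sim \<delta> x y"
  shows "y \<in> shr U"
proof (rule ccontr)
  assume "y \<notin> shr U"
  then obtain z where z: "z \<in> topspace X - U" "sim \<delta> z y" using y unfolding shr_def sat_def by blast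
  have xX: "x \<in> topspace X" using x unfolding shr_def by blast
  have "sim \<delta> y x" using s by (rule sim_sym)
  then have "sim \<delta> z x" using sim_trans[of z y x] z y xX by blast
  then have "x \<in> sat (topspace X - U)" using z xX unfolding sat_def by blast
  then show False using x unfolding shr_def by blast
qed

lemma shr_super:
  assumes "F \<subseteq> U" "F \<subseteq> topspace X" "\<And>x y. x \<in> F \<Longrightarrow> y \<in> topspace X \<Longrightarrow> sim \<delta> x y \<Longrightarrow> y \<in> F"
  shows "F \<subseteq> shr U"
proof
  fix x assume x: "x \<in> F"
  show "x \<in> shr U"
  proof (rule ccontr)
    assume "x \<notin> shr U"
    then obtain z where z: "z \<in> topspace X - U" "sim \<delta> z x" using x assms(2) unfolding shr_def sat_def by blast
    have "sim \<delta> x z" using z(2) by (rule sim_sym)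
    then have "z \<in> F" using assms(3) x z by blast
    then show False using z assms(1) by blast
  qed
qed

lemma open_image_sat:
  assumes "openin X U" "\<And>x y. x \<in> U \<Longrightarrow> y \<in> topspace X \<Longrightarrow> sim \<delta> x y \<Longrightarrow> y \<in> U"
  shows "openin Q (rep ` U)"
proof -
  have Usub: "U \<subseteq> topspace X" using assms(1) openin_subset by blast
  have "{x \<in> topspace X. rep x \<in> rep ` U} = U"
  proof
    show "{x \<in> topspace X. rep x \<in> rep ` U} \<subseteq> U"
    proof
      fix x assume "x \<in> {x \<in> topspace X. rep x \<in> rep ` U}"
      then obtain u where u: "u \<in> U" "rep x = rep u" "x \<in> topspace X" by blast
      then have "sim \<delta> u x" using rep_eq_iff Usub sim_sym by blast
      then show "x \<in> U" using assms(2) u by blast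
    qed
  qed (use Usub in auto)
  then show ?thesis unfolding openin_Q using Usub assms(1) by auto
qed

lemma class_closed: "x \<in> topspace X \<Longrightarrow> closedin X {y \<in> topspace X. sim \<delta> x y}"
proof -
  assume x: "x \<in> topspace X"
  have "closedin X {x}" using haus x by (simp add: Hausdorff_imp_t1_space closedin_t1_singleton)
  then have "closedin X (sat {x})" by (rule sat_closed)
  moreover have "sat {x} = {y \<in> topspace X. sim \<delta> x y}" unfolding sat_def by auto
  ultimately show ?thesis by simp
qed

lemma Q_haus: "Hausdorff_space Q"
  unfolding Hausdorff_space_def
proof (intro allI impI)
  fix s t assume st: "s \<in> topspace Q \<and> t \<in> topspace Q \<and> s \<noteq> t"
  then obtain x y where xy: "x \<in> topspace X" "y \<in> topspace X" "s = rep x" "t = rep y"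
    using topspace_Q by auto
  have ns: "\<not> sim \<delta> x y" using rep_eq xy st by blast
  define Cx where "Cx = {z \<in> topspace X. sim \<delta> x z}"
  define Cy where "Cy = {z \<in> topspace X. sim \<delta> y z}"
  have "compactin X Cx" "compactin X Cy"
    unfolding Cx_def Cy_def using class_closed xy cpt closedin_compact_space by blast+
  moreover have "disjnt Cx Cy" unfolding disjnt_def
  proof (rule ccontr)
    assume "Cx \<inter> Cy \<noteq> {}"
    then obtain z where z: "z \<in> topspace X" "sim \<delta> x z" "sim \<delta> y z" unfolding Cx_def Cy_def by blast
    have "sim \<delta> z y" using z(3) by (rule sim_sym)
    then have "sim \<delta> x y" using sim_trans[of x z y] z xy by blast
    then show False using ns by blast
  qed
  ultimately have "\<exists>U V. openin X U \<and> openin X V \<and> Cx \<subseteq> U \<and> Cy \<subseteq> V \<and> disjnt U V"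
    using haus unfolding Hausdorff_space_compact_sets by blast
  then obtain U0 V0 where UV: "openin X U0" "openin X V0" "Cx \<subseteq> U0" "Cy \<subseteq> V0" "disjnt U0 V0"
    by (elim exE conjE)
  have satx: "\<And>a b. a \<in> Cx \<Longrightarrow> b \<in> topspace X \<Longrightarrow> sim \<delta> a b \<Longrightarrow> b \<in> Cx"
    unfolding Cx_def using sim_trans[of x] xy by blast
  have saty: "\<And>a b. a \<in> Cy \<Longrightarrow> b \<in> topspace X \<Longrightarrow> sim \<delta> a b \<Longrightarrow> b \<in> Cy"
    unfolding Cy_def using sim_trans[of y] xy by blast
  have CxU: "Cx \<subseteq> shr U0" by (rule shr_super) (use UV satx Cx_def in auto)
  have CyV: "Cy \<subseteq> shr V0" by (rule shr_super) (use UV saty Cy_def in auto)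
  have o1: "openin Q (rep ` shr U0)" by (rule open_image_sat) (use shr_open UV shr_sat in auto)
  have o2: "openin Q (rep ` shr V0)" by (rule open_image_sat) (use shr_open UV shr_sat in auto)
  have "x \<in> Cx" "y \<in> Cy" unfolding Cx_def Cy_def using xy sim_refl by auto
  then have i: "s \<in> rep ` shr U0" "t \<in> rep ` shr V0" using CxU CyV xy by auto
  have "disjnt (rep ` shr U0) (rep ` shr V0)"
    unfolding disjnt_def
  proof (rule ccontr)
    assume "rep ` shr U0 \<inter> rep ` shr V0 \<noteq> {}"
    then obtain u v where uv: "u \<in> shr U0" "v \<in> shr V0" "rep u = rep v" by auto
    have uX: "u \<in> topspace X" "v \<in> topspace X" using uv shr_open UV openin_subset by blast+
    then have "sim \<delta> u v" using rep_eq_iff uv by blast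
    then have "v \<in> shr U0" using shr_sat uv uX by blast
    then show False using uv(2) shr_sub UV(5) unfolding disjnt_def by blast
  qed
  then show "\<exists>U V. openin Q U \<and> openin Q V \<and> s \<in> U \<and> t \<in> V \<and> disjnt U V"
    using o1 o2 i by blast
qed

lemma Q_compact: "compact_space Q"
proof -
  have "compactin Q (rep ` topspace X)"
    using image_compactin cont_rep cpt unfolding compact_space_def by blast
  then show ?thesis unfolding compact_space_def topspace_Q .
qed

lemma Q_lsc: "openin (prod_topology Q Q) {p \<in> topspace Q \<times> topspace Q. u < \<delta> (fst p) (snd p)}"
proof -
  define N where "N = {p \<in> topspace (prod_topology X X). \<not> u < \<delta> (fst p) (snd p)}"
  have o: "openin (prod_topology X X) {p \<in> topspace (prod_topology X X). u < \<delta> (fst p) (snd p)}"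
    using lscd unfolding lsc_def by blast
  have c: "closedin (prod_topology X X) (topspace (prod_topology X X) - {p \<in> topspace (prod_topology X X). u < \<delta> (fst p) (snd p)})"
    by (rule closedin_diff[OF closedin_topspace o])
  moreover have "N = topspace (prod_topology X X) - {p \<in> topspace (prod_topology X X). u < \<delta> (fst p) (snd p)}"
    unfolding N_def by auto
  ultimately have "closedin (prod_topology X X) N" by (simp only:)
  then have "compactin (prod_topology X X) N"
    using closedin_compact_space cpt compact_space_prod_topology by blast
  moreover have cc: "continuous_map (prod_topology X X) (prod_topology Q Q) (\<lambda>p. (rep (fst p), rep (snd p)))"
  proof (rule continuous_map_pairedI)
    show "continuous_map (prod_topology X X) Q (\<lambda>x. rep (fst x))"
      using continuous_map_compose[OF continuous_map_fst cont_rep] by (simp add: o_def)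
    show "continuous_map (prod_topology X X) Q (\<lambda>x. rep (snd x))"
      using continuous_map_compose[OF continuous_map_snd cont_rep] by (simp add: o_def)
  qed
  ultimately have "compactin (prod_topology Q Q) ((\<lambda>p. (rep (fst p), rep (snd p))) ` N)"
    by (rule image_compactin)
  then have cl: "closedin (prod_topology Q Q) ((\<lambda>p. (rep (fst p), rep (snd p))) ` N)"
    using compactin_imp_closedin Q_haus Hausdorff_space_prod_topology by blast
  have "{p \<in> topspace Q \<times> topspace Q. u < \<delta> (fst p) (snd p)} =
        topspace (prod_topology Q Q) - (\<lambda>p. (rep (fst p), rep (snd p))) ` N"
  proof (rule set_eqI, rule iffI)
    fix p assume p: "p \<in> {p \<in> topspace Q \<times> topspace Q. u < \<delta> (fst p) (snd p)}"
    have "p \<notin> (\<lambda>p. (rep (fst p), rep (snd p))) ` N"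
    proof
      assume "p \<in> (\<lambda>p. (rep (fst p), rep (snd p))) ` N"
      then obtain x y where "(x,y) \<in> N" "p = (rep x, rep y)" by auto
      then show False using p delta_rep unfolding N_def by auto
    qed
    then show "p \<in> topspace (prod_topology Q Q) - (\<lambda>p. (rep (fst p), rep (snd p))) ` N" using p by auto
  next
    fix p assume p: "p \<in> topspace (prod_topology Q Q) - (\<lambda>p. (rep (fst p), rep (snd p))) ` N"
    then obtain x y where xy: "x \<in> topspace X" "y \<in> topspace X" "p = (rep x, rep y)"
      using topspace_Q by auto
    have "(x,y) \<notin> N"
    proof
      assume "(x,y) \<in> N"
      then have "(rep x, rep y) \<in> (\<lambda>p. (rep (fst p), rep (snd p))) ` N" by (rule rev_image_eqI) simp
      then show False using p xy by simp
    qed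
    then show "p \<in> {p \<in> topspace Q \<times> topspace Q. u < \<delta> (fst p) (snd p)}"
      using xy p delta_rep unfolding N_def by auto
  qed
  moreover have "openin (prod_topology Q Q) (topspace Q \<times> topspace Q)"
    using openin_topspace[of "prod_topology Q Q"] by simp
  ultimately show ?thesis using cl by (simp add: openin_diff)
qed

lemma topQ_sub: "topspace Q \<subseteq> topspace X"
  using topspace_Q rep_in by auto

lemma rep_idem: assumes "x \<in> topspace Q" shows "rep x = x"
proof -
  obtain x0 where x0: "x0 \<in> topspace X" "x = rep x0" using assms topspace_Q by auto
  have "rep (rep x0) = rep x0" by (rule rep_eq) (use rep_in x0 in auto)
  then show ?thesis using x0 by simp
qed

lemma Q_MetCH: "MetCH_sep Q \<delta>"
proof -
  have r: "\<forall>x\<in>topspace Q. \<delta> x x = 0" using topQ_sub refl by blast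
  have t: "\<forall>x\<in>topspace Q. \<forall>y\<in>topspace Q. \<forall>z\<in>topspace Q. \<delta> x z \<le> \<delta> x y + \<delta> y z"
    using topQ_sub tri by blast
  have s: "\<forall>x\<in>topspace Q. \<forall>y\<in>topspace Q. \<delta> x y = 0 \<and> \<delta> y x = 0 \<longrightarrow> x = y"
  proof (intro ballI impI)
    fix x y assume xy: "x \<in> topspace Q" "y \<in> topspace Q" and d: "\<delta> x y = 0 \<and> \<delta> y x = 0"
    then have "sim \<delta> x y" by (simp add: sim_def)
    then have "rep x = rep y" using rep_eq topQ_sub xy by blast
    then show "x = y" using rep_idem xy by simp
  qed
  show ?thesis unfolding MetCH_sep_def using Q_compact Q_haus r t s Q_lsc by blast
qed

end


lemma ennreal_add_INF_eq:
  fixes c :: ennreal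
  assumes "I \<noteq> {}"
  shows "c + (INF p\<in>I. g p) = (INF p\<in>I. c + g p)"
proof -
  have "c + Inf (g ` I) = Inf ((\<lambda>x. c + x) ` (g ` I))"
    by (rule continuous_at_Inf_mono) (use assms in \<open>auto simp: mono_def add_left_mono intro!: continuous_intros\<close>)
  then show ?thesis by (simp add: image_comp o_def)
qed

lemma ennreal_le_add_INF:
  fixes L c :: ennreal
  assumes "\<And>p. p \<in> I \<Longrightarrow> L \<le> c + g p"
  shows "L \<le> c + (INF p\<in>I. g p)"
proof (cases "I = {}")
  case True then show ?thesis by simp
next
  case False
  then show ?thesis using assms by (simp add: ennreal_add_INF_eq le_INF_iff)
qed

lemma ennreal_le_INF_add:
  fixes L c :: ennreal
  assumes "\<And>p. p \<in> I \<Longrightarrow> L \<le> g p + c"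
  shows "L \<le> (INF p\<in>I. g p) + c"
  using ennreal_le_add_INF[of I L c g] assms by (simp add: add.commute)

lemma ennreal_le_INF_add_INF:
  fixes L :: ennreal
  assumes "\<And>p q. p \<in> I \<Longrightarrow> q \<in> J \<Longrightarrow> L \<le> g p + h q"
  shows "L \<le> (INF p\<in>I. g p) + (INF q\<in>J. h q)"
proof (rule ennreal_le_INF_add)
  fix p assume "p \<in> I"
  then show "L \<le> g p + (INF q\<in>J. h q)" using assms by (intro ennreal_le_add_INF) auto
qed

lemma lsc_cong:
  assumes "lsc X \<phi>" "\<And>x. x \<in> topspace X \<Longrightarrow> \<phi> x = \<psi> x"
  shows "lsc X \<psi>"
proof -
  have "{x \<in> topspace X. u < \<psi> x} = {x \<in> topspace X. u < \<phi> x}" for u using assms(2) by auto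
  then show ?thesis using assms(1) unfolding lsc_def by simp
qed

lemma MetCH_lsc: "MetCH_sep X d \<Longrightarrow> lsc (prod_topology X X) (\<lambda>p. d (fst p) (snd p))"
  unfolding MetCH_sep_def lsc_def by simp

definition stop :: "('c \<Rightarrow> 'z) \<Rightarrow> 'c topology \<Rightarrow> ('b \<Rightarrow> 'z) \<Rightarrow> 'b topology \<Rightarrow> 'z topology" where
  "stop i1 C i2 B = topology (\<lambda>U. U \<subseteq> i1 ` topspace C \<union> i2 ` topspace B \<and>
      openin C {c \<in> topspace C. i1 c \<in> U} \<and> openin B {b \<in> topspace B. i2 b \<in> U})"

locale sumsp =
  fixes i1 :: "'c \<Rightarrow> 'z" and C :: "'c topology" and i2 :: "'b \<Rightarrow> 'z" and B :: "'b topology"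
  assumes inj1: "inj i1" and inj2: "inj i2" and disj: "\<And>x y. i1 x \<noteq> i2 y"
begin

abbreviation "S \<equiv> stop i1 C i2 B"

lemma istop_S: "istopology (\<lambda>U. U \<subseteq> i1 ` topspace C \<union> i2 ` topspace B \<and>
      openin C {c \<in> topspace C. i1 c \<in> U} \<and> openin B {b \<in> topspace B. i2 b \<in> U})"
proof -
  have 1: "S' \<inter> T \<subseteq> i1 ` topspace C \<union> i2 ` topspace B \<and>
      openin C {c \<in> topspace C. i1 c \<in> S' \<inter> T} \<and> openin B {b \<in> topspace B. i2 b \<in> S' \<inter> T}"
    if S: "S' \<subseteq> i1 ` topspace C \<union> i2 ` topspace B \<and>
      openin C {c \<in> topspace C. i1 c \<in> S'} \<and> openin B {b \<in> topspace B. i2 b \<in> S'}"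
    and T: "T \<subseteq> i1 ` topspace C \<union> i2 ` topspace B \<and>
      openin C {c \<in> topspace C. i1 c \<in> T} \<and> openin B {b \<in> topspace B. i2 b \<in> T}" for S' T
  proof -
    have "{c \<in> topspace C. i1 c \<in> S' \<inter> T} = {c \<in> topspace C. i1 c \<in> S'} \<inter> {c \<in> topspace C. i1 c \<in> T}" by auto
    moreover have "{c \<in> topspace B. i2 c \<in> S' \<inter> T} = {c \<in> topspace B. i2 c \<in> S'} \<inter> {c \<in> topspace B. i2 c \<in> T}" by auto
    ultimately show ?thesis using S T by auto
  qed
  have 2: "\<Union>K \<subseteq> i1 ` topspace C \<union> i2 ` topspace B \<and>
      openin C {c \<in> topspace C. i1 c \<in> \<Union>K} \<and> openin B {b \<in> topspace B. i2 b \<in> \<Union>K}"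
    if K: "\<forall>S\<in>K. S \<subseteq> i1 ` topspace C \<union> i2 ` topspace B \<and>
      openin C {c \<in> topspace C. i1 c \<in> S} \<and> openin B {b \<in> topspace B. i2 b \<in> S}" for K
  proof -
    have "{c \<in> topspace C. i1 c \<in> \<Union>K} = \<Union>((\<lambda>S. {c \<in> topspace C. i1 c \<in> S}) ` K)" by auto
    moreover have "{c \<in> topspace B. i2 c \<in> \<Union>K} = \<Union>((\<lambda>S. {c \<in> topspace B. i2 c \<in> S}) ` K)" by auto
    ultimately show ?thesis using K by auto
  qed
  show ?thesis unfolding istopology_def using 1 2 by blast
qed

lemma openin_S: "openin S U \<longleftrightarrow> U \<subseteq> i1 ` topspace C \<union> i2 ` topspace B \<and>
      openin C {c \<in> topspace C. i1 c \<in> U} \<and> openin B {b \<in> topspace B. i2 b \<in> U}"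
  unfolding stop_def using istop_S by simp

lemma topspace_S: "topspace S = i1 ` topspace C \<union> i2 ` topspace B"
proof -
  have e1: "{c \<in> topspace C. i1 c \<in> i1 ` topspace C \<union> i2 ` topspace B} = topspace C" by auto
  have e2: "{c \<in> topspace B. i2 c \<in> i1 ` topspace C \<union> i2 ` topspace B} = topspace B" by auto
  have "openin S (i1 ` topspace C \<union> i2 ` topspace B)" unfolding openin_S e1 e2 by auto
  then have "i1 ` topspace C \<union> i2 ` topspace B \<subseteq> topspace S" by (rule openin_subset)
  moreover have "topspace S \<subseteq> i1 ` topspace C \<union> i2 ` topspace B" using openin_S openin_topspace by blast
  ultimately show ?thesis by blast
qed

lemma open_i1: assumes "openin C U" shows "openin S (i1 ` U)"
proof -
  have "{c \<in> topspace C. i1 c \<in> i1 ` U} = U" using assms openin_subset inj1 by (auto simp: inj_image_mem_iff)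
  moreover have "{b \<in> topspace B. i2 b \<in> i1 ` U} = {}" using disj by (auto simp: eq_commute[of "i2 _"])
  ultimately show ?thesis unfolding openin_S using assms openin_subset by (simp only:) auto
qed

lemma open_i2: assumes "openin B U" shows "openin S (i2 ` U)"
proof -
  have "{c \<in> topspace B. i2 c \<in> i2 ` U} = U" using assms openin_subset inj2 by (auto simp: inj_image_mem_iff)
  moreover have "{b \<in> topspace C. i1 b \<in> i2 ` U} = {}" using disj by auto
  ultimately show ?thesis unfolding openin_S using assms openin_subset by (simp only:) auto
qed

lemma cont_i1: "continuous_map C S i1"
  unfolding continuous_map_def topspace_S openin_S by auto

lemma cont_i2: "continuous_map B S i2"
  unfolding continuous_map_def topspace_S openin_S by auto

lemma compact_S: "compact_space C \<Longrightarrow> compact_space B \<Longrightarrow> compact_space S"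
  unfolding compact_space_def topspace_S
  by (intro compactin_Un image_compactin[OF _ cont_i1] image_compactin[OF _ cont_i2])

lemma haus_S:
  assumes hC: "Hausdorff_space C" and hB: "Hausdorff_space B"
  shows "Hausdorff_space S"
  unfolding Hausdorff_space_def
proof (intro allI impI)
  fix x y assume xy: "x \<in> topspace S \<and> y \<in> topspace S \<and> x \<noteq> y"
  have oC: "openin S (i1 ` topspace C)" "openin S (i2 ` topspace B)" using open_i1 open_i2 by auto
  have dCB: "disjnt (i1 ` topspace C) (i2 ` topspace B)" "disjnt (i2 ` topspace B) (i1 ` topspace C)"
    using disj by (auto simp: disjnt_def dest: sym)
  show "\<exists>U V. openin S U \<and> openin S V \<and> x \<in> U \<and> y \<in> V \<and> disjnt U V"
  proof (cases "x \<in> i1 ` topspace C")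
    case xC: True
    then obtain c where c: "c \<in> topspace C" "x = i1 c" by auto
    show ?thesis
    proof (cases "y \<in> i1 ` topspace C")
      case True
      then obtain c' where c': "c' \<in> topspace C" "y = i1 c'" by auto
      then have "c \<noteq> c'" using c xy by auto
      then obtain U V where "openin C U" "openin C V" "c \<in> U" "c' \<in> V" "disjnt U V"
        using hC c c' unfolding Hausdorff_space_def by metis
      then show ?thesis using c c' inj1 open_i1
        by (intro exI[of _ "i1 ` U"] exI[of _ "i1 ` V"]) (auto simp: disjnt_def inj_image_mem_iff inj_eq)
    next
      case False
      then have "y \<in> i2 ` topspace B" using xy topspace_S by auto
      then show ?thesis using xC oC dCB by blast
    qed
  next
    case xB: False
    then obtain b where b: "b \<in> topspace B" "x = i2 b" using xy topspace_S by auto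
    show ?thesis
    proof (cases "y \<in> i2 ` topspace B")
      case True
      then obtain b' where b': "b' \<in> topspace B" "y = i2 b'" by auto
      then have "b \<noteq> b'" using b xy by auto
      then obtain U V where "openin B U" "openin B V" "b \<in> U" "b' \<in> V" "disjnt U V"
        using hB b b' unfolding Hausdorff_space_def by metis
      then show ?thesis using b b' inj2 open_i2
        by (intro exI[of _ "i2 ` U"] exI[of _ "i2 ` V"]) (auto simp: disjnt_def inj_image_mem_iff inj_eq)
    next
      case False
      then have "y \<in> i1 ` topspace C" using xy topspace_S by auto
      then show ?thesis using b oC dCB by blast
    qed
  qed
qed

lemma open_prod_left:
  assumes sub: "W \<subseteq> topspace S \<times> topspace Y"
    and o1: "openin (prod_topology C Y) {p \<in> topspace C \<times> topspace Y. (i1 (fst p), snd p) \<in> W}"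
    and o2: "openin (prod_topology B Y) {p \<in> topspace B \<times> topspace Y. (i2 (fst p), snd p) \<in> W}"
  shows "openin (prod_topology S Y) W"
  unfolding openin_prod_topology_alt
proof (intro allI impI)
  fix x y assume xy: "(x, y) \<in> W"
  then have xS: "x \<in> topspace S" and yY: "y \<in> topspace Y" using sub by auto
  show "\<exists>U V. openin S U \<and> openin Y V \<and> x \<in> U \<and> y \<in> V \<and> U \<times> V \<subseteq> W"
  proof (cases "x \<in> i1 ` topspace C")
    case True
    then obtain c where c: "c \<in> topspace C" "x = i1 c" by auto
    then have mem: "(c, y) \<in> {p \<in> topspace C \<times> topspace Y. (i1 (fst p), snd p) \<in> W}" using xy yY by auto
    note ex = openin_prod_topology_alt[THEN iffD1, OF o1, rule_format, OF mem]
    obtain U V where UV: "openin C U" "openin Y V" "c \<in> U" "y \<in> V"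
      "U \<times> V \<subseteq> {p \<in> topspace C \<times> topspace Y. (i1 (fst p), snd p) \<in> W}"
      using ex by (elim exE conjE) (rule that; assumption)
    then have "i1 ` U \<times> V \<subseteq> W" by auto
    moreover have "openin S (i1 ` U)" by (rule open_i1[OF UV(1)])
    moreover have "x \<in> i1 ` U" using UV(3) c by simp
    ultimately show ?thesis using UV(2,4) by (intro exI[of _ "i1 ` U"] exI[of _ V]) simp
  next
    case False
    then obtain b where b: "b \<in> topspace B" "x = i2 b" using xS topspace_S by auto
    then have mem: "(b, y) \<in> {p \<in> topspace B \<times> topspace Y. (i2 (fst p), snd p) \<in> W}" using xy yY by auto
    note ex = openin_prod_topology_alt[THEN iffD1, OF o2, rule_format, OF mem]
    obtain U V where UV: "openin B U" "openin Y V" "b \<in> U" "y \<in> V"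
      "U \<times> V \<subseteq> {p \<in> topspace B \<times> topspace Y. (i2 (fst p), snd p) \<in> W}"
      using ex by (elim exE conjE) (rule that; assumption)
    then have "i2 ` U \<times> V \<subseteq> W" by auto
    moreover have "openin S (i2 ` U)" by (rule open_i2[OF UV(1)])
    moreover have "x \<in> i2 ` U" using UV(3) b by simp
    ultimately show ?thesis using UV(2,4) by (intro exI[of _ "i2 ` U"] exI[of _ V]) simp
  qed
qed

lemma open_prod_right:
  assumes sub: "W \<subseteq> topspace Y \<times> topspace S"
    and o1: "openin (prod_topology Y C) {p \<in> topspace Y \<times> topspace C. (fst p, i1 (snd p)) \<in> W}"
    and o2: "openin (prod_topology Y B) {p \<in> topspace Y \<times> topspace B. (fst p, i2 (snd p)) \<in> W}"
  shows "openin (prod_topology Y S) W"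
  unfolding openin_prod_topology_alt
proof (intro allI impI)
  fix y x assume xy: "(y, x) \<in> W"
  then have xS: "x \<in> topspace S" and yY: "y \<in> topspace Y" using sub by auto
  show "\<exists>V U. openin Y V \<and> openin S U \<and> y \<in> V \<and> x \<in> U \<and> V \<times> U \<subseteq> W"
  proof (cases "x \<in> i1 ` topspace C")
    case True
    then obtain c where c: "c \<in> topspace C" "x = i1 c" by auto
    then have mem: "(y, c) \<in> {p \<in> topspace Y \<times> topspace C. (fst p, i1 (snd p)) \<in> W}" using xy yY by auto
    note ex = openin_prod_topology_alt[THEN iffD1, OF o1, rule_format, OF mem]
    obtain V U where UV: "openin Y V" "openin C U" "y \<in> V" "c \<in> U"
      "V \<times> U \<subseteq> {p \<in> topspace Y \<times> topspace C. (fst p, i1 (snd p)) \<in> W}"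
      using ex by (elim exE conjE) (rule that; assumption)
    then have "V \<times> i1 ` U \<subseteq> W" by auto
    moreover have "openin S (i1 ` U)" by (rule open_i1[OF UV(2)])
    moreover have "x \<in> i1 ` U" using UV(4) c by simp
    ultimately show ?thesis using UV(1,3) by (intro exI[of _ V] exI[of _ "i1 ` U"]) simp
  next
    case False
    then obtain b where b: "b \<in> topspace B" "x = i2 b" using xS topspace_S by auto
    then have mem: "(y, b) \<in> {p \<in> topspace Y \<times> topspace B. (fst p, i2 (snd p)) \<in> W}" using xy yY by auto
    note ex = openin_prod_topology_alt[THEN iffD1, OF o2, rule_format, OF mem]
    obtain V U where UV: "openin Y V" "openin B U" "y \<in> V" "b \<in> U"
      "V \<times> U \<subseteq> {p \<in> topspace Y \<times> topspace B. (fst p, i2 (snd p)) \<in> W}"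
      using ex by (elim exE conjE) (rule that; assumption)
    then have "V \<times> i2 ` U \<subseteq> W" by auto
    moreover have "openin S (i2 ` U)" by (rule open_i2[OF UV(2)])
    moreover have "x \<in> i2 ` U" using UV(4) b by simp
    ultimately show ?thesis using UV(1,3) by (intro exI[of _ V] exI[of _ "i2 ` U"]) simp
  qed
qed

lemma lsc_left:
  assumes l1: "lsc (prod_topology C Y) (\<lambda>p. \<phi> (i1 (fst p)) (snd p))"
    and l2: "lsc (prod_topology B Y) (\<lambda>p. \<phi> (i2 (fst p)) (snd p))"
  shows "lsc (prod_topology S Y) (\<lambda>p. \<phi> (fst p) (snd p))"
  unfolding lsc_def
proof
  fix u
  show "openin (prod_topology S Y) {p \<in> topspace (prod_topology S Y). u < \<phi> (fst p) (snd p)}"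
  proof (rule open_prod_left)
    have "{p \<in> topspace C \<times> topspace Y. (i1 (fst p), snd p) \<in> {p \<in> topspace (prod_topology S Y). u < \<phi> (fst p) (snd p)}}
       = {p \<in> topspace (prod_topology C Y). u < \<phi> (i1 (fst p)) (snd p)}" by (auto simp: topspace_S)
    then show "openin (prod_topology C Y) {p \<in> topspace C \<times> topspace Y. (i1 (fst p), snd p) \<in> {p \<in> topspace (prod_topology S Y). u < \<phi> (fst p) (snd p)}}"
      using l1 unfolding lsc_def by simp
    have "{p \<in> topspace B \<times> topspace Y. (i2 (fst p), snd p) \<in> {p \<in> topspace (prod_topology S Y). u < \<phi> (fst p) (snd p)}}
       = {p \<in> topspace (prod_topology B Y). u < \<phi> (i2 (fst p)) (snd p)}" by (auto simp: topspace_S)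
    then show "openin (prod_topology B Y) {p \<in> topspace B \<times> topspace Y. (i2 (fst p), snd p) \<in> {p \<in> topspace (prod_topology S Y). u < \<phi> (fst p) (snd p)}}"
      using l2 unfolding lsc_def by simp
  qed (auto simp: topspace_S)
qed

lemma lsc_right:
  assumes l1: "lsc (prod_topology Y C) (\<lambda>p. \<phi> (fst p) (i1 (snd p)))"
    and l2: "lsc (prod_topology Y B) (\<lambda>p. \<phi> (fst p) (i2 (snd p)))"
  shows "lsc (prod_topology Y S) (\<lambda>p. \<phi> (fst p) (snd p))"
  unfolding lsc_def
proof
  fix u
  show "openin (prod_topology Y S) {p \<in> topspace (prod_topology Y S). u < \<phi> (fst p) (snd p)}"
  proof (rule open_prod_right)
    have "{p \<in> topspace Y \<times> topspace C. (fst p, i1 (snd p)) \<in> {p \<in> topspace (prod_topology Y S). u < \<phi> (fst p) (snd p)}}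
       = {p \<in> topspace (prod_topology Y C). u < \<phi> (fst p) (i1 (snd p))}" by (auto simp: topspace_S)
    then show "openin (prod_topology Y C) {p \<in> topspace Y \<times> topspace C. (fst p, i1 (snd p)) \<in> {p \<in> topspace (prod_topology Y S). u < \<phi> (fst p) (snd p)}}"
      using l1 unfolding lsc_def by simp
    have "{p \<in> topspace Y \<times> topspace B. (fst p, i2 (snd p)) \<in> {p \<in> topspace (prod_topology Y S). u < \<phi> (fst p) (snd p)}}
       = {p \<in> topspace (prod_topology Y B). u < \<phi> (fst p) (i2 (snd p))}" by (auto simp: topspace_S)
    then show "openin (prod_topology Y B) {p \<in> topspace Y \<times> topspace B. (fst p, i2 (snd p)) \<in> {p \<in> topspace (prod_topology Y S). u < \<phi> (fst p) (snd p)}}"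
      using l2 unfolding lsc_def by simp
  qed (auto simp: topspace_S)
qed

end


locale pushsetup = sumsp i1 C i2 B
  for i1 :: "'c \<Rightarrow> 'z" and C :: "'c topology" and i2 :: "'b \<Rightarrow> 'z" and B :: "'b topology" +
  fixes A :: "'a topology" and dA dB dC and m :: "'a \<Rightarrow> 'b" and f :: "'a \<Rightarrow> 'c"
  assumes MA: "MetCH_sep A dA" and MB: "MetCH_sep B dB" and MC: "MetCH_sep C dC"
    and cm: "continuous_map A B m" and mf: "mor A dA C dC f"
    and hyp: "\<And>a a'. a \<in> topspace A \<Longrightarrow> a' \<in> topspace A \<Longrightarrow> dC (f a) (f a') \<le> dB (m a) (m a')"
begin

definition "pdir z w = (if z \<in> range i1 \<and> w \<in> range i1 then dC (inv i1 z) (inv i1 w)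
   else if z \<in> range i2 \<and> w \<in> range i2 then dB (inv i2 z) (inv i2 w) else top)"

definition "pside z a = (if z \<in> range i1 then i1 (f a) else i2 (m a))"

definition "pterm z w p = pdir z (pside z (fst p)) + dC (f (fst p)) (f (snd p)) + pdir (pside w (snd p)) w"

definition "pd z w = min (pdir z w) (INF p\<in>topspace A \<times> topspace A. pterm z w p)"

lemma r12: "i1 c \<notin> range i2" "i2 b \<notin> range i1" using disj by (auto dest: sym)

lemma pdir_simps[simp]:
  "pdir (i1 c) (i1 c') = dC c c'" "pdir (i2 b) (i2 b') = dB b b'"
  "pdir (i1 c) (i2 b) = top" "pdir (i2 b) (i1 c) = top"
  unfolding pdir_def using r12 inj1 inj2 by auto

lemma pside_simps[simp]: "pside (i1 c) a = i1 (f a)" "pside (i2 b) a = i2 (m a)"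
  unfolding pside_def using r12 by auto

lemma fC: "a \<in> topspace A \<Longrightarrow> f a \<in> topspace C"
  using mf unfolding mor_def continuous_map_def by auto

lemma mB: "a \<in> topspace A \<Longrightarrow> m a \<in> topspace B"
  using cm unfolding continuous_map_def by auto

lemma fnon: "a \<in> topspace A \<Longrightarrow> a' \<in> topspace A \<Longrightarrow> dC (f a) (f a') \<le> dA a a'"
  using mf unfolding mor_def by auto

lemma dC_tri: "x \<in> topspace C \<Longrightarrow> y \<in> topspace C \<Longrightarrow> z \<in> topspace C \<Longrightarrow> dC x z \<le> dC x y + dC y z"
  using MC unfolding MetCH_sep_def by blast
lemma dB_tri: "x \<in> topspace B \<Longrightarrow> y \<in> topspace B \<Longrightarrow> z \<in> topspace B \<Longrightarrow> dB x z \<le> dB x y + dB y z"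
  using MB unfolding MetCH_sep_def by blast
lemma dC_refl: "x \<in> topspace C \<Longrightarrow> dC x x = 0"
  using MC unfolding MetCH_sep_def by blast
lemma dB_refl: "x \<in> topspace B \<Longrightarrow> dB x x = 0"
  using MB unfolding MetCH_sep_def by blast

lemma topS_cases:
  assumes "z \<in> topspace S"
  obtains (C) c where "c \<in> topspace C" "z = i1 c" | (B) b where "b \<in> topspace B" "z = i2 b"
  using assms topspace_S by auto

lemma pside_in: "z \<in> topspace S \<Longrightarrow> a \<in> topspace A \<Longrightarrow> pside z a \<in> topspace S"
  by (cases rule: topS_cases) (auto simp: topspace_S fC mB)

lemma topS_disj: "z \<in> topspace S \<Longrightarrow> (\<exists>c\<in>topspace C. z = i1 c) \<or> (\<exists>b\<in>topspace B. z = i2 b)"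
  using topspace_S by auto

lemma t1: assumes "x \<in> topspace S" "y \<in> topspace S" "z \<in> topspace S"
  shows "pdir x z \<le> pdir x y + pdir y z"
  using topS_disj[OF assms(1)] topS_disj[OF assms(2)] topS_disj[OF assms(3)]
  by (auto simp: dC_tri dB_tri)

lemma pside_eq: assumes "x \<in> topspace S" "y \<in> topspace S" "pdir x y \<noteq> top"
  shows "pside x a = pside y a"
  using topS_disj[OF assms(1)] topS_disj[OF assms(2)] assms(3) by auto

lemma t2: assumes "x \<in> topspace S" "y \<in> topspace S" "a \<in> topspace A"
  shows "pdir x (pside x a) \<le> pdir x y + pdir y (pside y a)"
proof (cases "pdir x y = top")
  case True then show ?thesis by simp
next
  case False
  then have "pside x a = pside y a" using pside_eq assms by blast
  then show ?thesis using t1[OF assms(1,2) pside_in[OF assms(2,3)]] by simp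
qed

lemma t4: assumes "z \<in> topspace S" "y \<in> topspace S" "a \<in> topspace A"
  shows "pdir (pside z a) z \<le> pdir (pside y a) y + pdir y z"
proof (cases "pdir y z = top")
  case True then show ?thesis by simp
next
  case False
  then have "pside z a = pside y a" using pside_eq assms by metis
  then show ?thesis using t1[OF pside_in[OF assms(2,3)] assms(2,1)] by simp
qed

lemma t3: assumes "y \<in> topspace S" "a \<in> topspace A" "a' \<in> topspace A"
  shows "dC (f a) (f a') \<le> pdir (pside y a) y + pdir y (pside y a')"
  using assms(1)
proof (cases rule: topS_cases)
  case (C c)
  then show ?thesis using dC_tri fC assms by simp
next
  case (B b)
  then have "dB (m a) (m a') \<le> dB (m a) b + dB b (m a')" using dB_tri mB assms by simp
  then show ?thesis using hyp[OF assms(2,3)] B by simp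
qed

lemma pd_le_dir: "pd x y \<le> pdir x y" unfolding pd_def by simp
lemma pd_le_P: "pd x y \<le> (INF p\<in>topspace A \<times> topspace A. pterm x y p)" unfolding pd_def by simp

lemma pd_refl: assumes "x \<in> topspace S" shows "pd x x = 0"
proof -
  have "pdir x x = 0" using topS_disj[OF assms] by (auto simp: dC_refl dB_refl)
  then show ?thesis using pd_le_dir[of x x] by simp
qed

lemma pd_tri:
  assumes x: "x \<in> topspace S" and y: "y \<in> topspace S" and z: "z \<in> topspace S"
  shows "pd x z \<le> pd x y + pd y z"
proof -
  let ?K = "topspace A \<times> topspace A"
  let ?P = "\<lambda>x y. (INF p\<in>?K. pterm x y p)"
  have DD: "pd x z \<le> pdir x y + pdir y z" using t1[OF x y z] pd_le_dir order.trans by blast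
  have DP: "pd x z \<le> pdir x y + ?P y z"
  proof -
    have "?P x z \<le> pdir x y + ?P y z"
    proof (rule ennreal_le_add_INF)
      fix p assume p: "p \<in> ?K"
      have "?P x z \<le> pterm x z p" using p by (rule INF_lower)
      also have "\<dots> \<le> pdir x y + pterm y z p"
      proof -
        have "pdir x (pside x (fst p)) \<le> pdir x y + pdir y (pside y (fst p))" using t2[OF x y, of "fst p"] p by auto
        then have "pterm x z p \<le> (pdir x y + pdir y (pside y (fst p))) + dC (f (fst p)) (f (snd p)) + pdir (pside z (snd p)) z"
          unfolding pterm_def by (intro add_right_mono)
        then show ?thesis unfolding pterm_def by (simp add: ac_simps)
      qed
      finally show "?P x z \<le> pdir x y + pterm y z p" .
    qed
    then show ?thesis using pd_le_P order.trans by blast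
  qed
  have PD: "pd x z \<le> ?P x y + pdir y z"
  proof -
    have "?P x z \<le> ?P x y + pdir y z"
    proof (rule ennreal_le_INF_add)
      fix p assume p: "p \<in> ?K"
      have "?P x z \<le> pterm x z p" using p by (rule INF_lower)
      also have "\<dots> \<le> pterm x y p + pdir y z"
      proof -
        have "pdir (pside z (snd p)) z \<le> pdir (pside y (snd p)) y + pdir y z" using t4[OF z y, of "snd p"] p by auto
        then have "pterm x z p \<le> pdir x (pside x (fst p)) + dC (f (fst p)) (f (snd p)) + (pdir (pside y (snd p)) y + pdir y z)"
          unfolding pterm_def by (intro add_left_mono)
        then show ?thesis unfolding pterm_def by (simp add: ac_simps)
      qed
      finally show "?P x z \<le> pterm x y p + pdir y z" .
    qed
    then show ?thesis using pd_le_P order.trans by blast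
  qed
  have PP: "pd x z \<le> ?P x y + ?P y z"
  proof -
    have "?P x z \<le> ?P x y + ?P y z"
    proof (rule ennreal_le_INF_add_INF)
      fix p q assume p: "p \<in> ?K" and q: "q \<in> ?K"
      obtain a1 a2 where p': "p = (a1, a2)" "a1 \<in> topspace A" "a2 \<in> topspace A" using p by auto
      obtain a3 a4 where q': "q = (a3, a4)" "a3 \<in> topspace A" "a4 \<in> topspace A" using q by auto
      have "?P x z \<le> pterm x z (a1, a4)" using p' q' by (intro INF_lower) auto
      also have "\<dots> = pdir x (pside x a1) + dC (f a1) (f a4) + pdir (pside z a4) z"
        unfolding pterm_def by simp
      also have "\<dots> \<le> pdir x (pside x a1) + (dC (f a1) (f a2) + (pdir (pside y a2) y + pdir y (pside y a3)) + dC (f a3) (f a4))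
                      + pdir (pside z a4) z"
      proof -
        have "dC (f a1) (f a4) \<le> dC (f a1) (f a3) + dC (f a3) (f a4)" using dC_tri fC p' q' by blast
        also have "dC (f a1) (f a3) \<le> dC (f a1) (f a2) + dC (f a2) (f a3)" using dC_tri fC p' q' by blast
        also have "dC (f a2) (f a3) \<le> pdir (pside y a2) y + pdir y (pside y a3)" using t3 y p' q' by blast
        finally have "dC (f a1) (f a4) \<le> dC (f a1) (f a2) + (pdir (pside y a2) y + pdir y (pside y a3)) + dC (f a3) (f a4)"
          by (simp add: add_mono)
        then show ?thesis by (simp add: add_mono)
      qed
      also have "\<dots> = pterm x y p + pterm y z q" unfolding pterm_def p' q' by (simp add: ac_simps)
      finally show "?P x z \<le> pterm x y p + pterm y z q" .
    qed
    then show ?thesis using pd_le_P order.trans by blast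
  qed
  have "pd x y = pdir x y \<or> pd x y = ?P x y" unfolding pd_def by (simp add: min_def)
  moreover have "pd y z = pdir y z \<or> pd y z = ?P y z" unfolding pd_def by (simp add: min_def)
  ultimately show ?thesis using DD DP PD PP by auto
qed

end


lemma cont_ff: "continuous_map (prod_topology (prod_topology X Y) (prod_topology Z W)) X (\<lambda>r. fst (fst r))"
  using continuous_map_compose[OF continuous_map_fst continuous_map_fst] by (simp add: o_def)
lemma cont_sf: "continuous_map (prod_topology (prod_topology X Y) (prod_topology Z W)) Y (\<lambda>r. snd (fst r))"
  using continuous_map_compose[OF continuous_map_fst continuous_map_snd] by (simp add: o_def)
lemma cont_fs: "continuous_map (prod_topology (prod_topology X Y) (prod_topology Z W)) Z (\<lambda>r. fst (snd r))"
  using continuous_map_compose[OF continuous_map_snd continuous_map_fst] by (simp add: o_def)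
lemma cont_ss: "continuous_map (prod_topology (prod_topology X Y) (prod_topology Z W)) W (\<lambda>r. snd (snd r))"
  using continuous_map_compose[OF continuous_map_snd continuous_map_snd] by (simp add: o_def)

lemma lsc_via:
  assumes "MetCH_sep Y d" "continuous_map P Y g1" "continuous_map P Y g2"
  shows "lsc P (\<lambda>p. d (g1 p) (g2 p))"
proof -
  have "continuous_map P (prod_topology Y Y) (\<lambda>p. (g1 p, g2 p))"
    using assms by (intro continuous_map_pairedI)
  from lsc_compose[OF this MetCH_lsc[OF assms(1)]] show ?thesis by simp
qed

context pushsetup
begin

lemma lsc_pdir: "lsc (prod_topology S S) (\<lambda>p. pdir (fst p) (snd p))"
proof (rule lsc_left)
  have a: "lsc (prod_topology C C) (\<lambda>p. pdir (i1 (fst p)) (i1 (snd p)))"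
    by (rule lsc_cong[OF MetCH_lsc[OF MC]]) simp
  have b: "lsc (prod_topology C B) (\<lambda>p. pdir (i1 (fst p)) (i2 (snd p)))"
    by (rule lsc_cong[OF lsc_const[of _ top]]) simp
  show "lsc (prod_topology C S) (\<lambda>p. pdir (i1 (fst p)) (snd p))"
    using lsc_right[where \<phi>="\<lambda>c z. pdir (i1 c) z", OF a b] by simp
  have a': "lsc (prod_topology B C) (\<lambda>p. pdir (i2 (fst p)) (i1 (snd p)))"
    by (rule lsc_cong[OF lsc_const[of _ top]]) simp
  have b': "lsc (prod_topology B B) (\<lambda>p. pdir (i2 (fst p)) (i2 (snd p)))"
    by (rule lsc_cong[OF MetCH_lsc[OF MB]]) simp
  show "lsc (prod_topology B S) (\<lambda>p. pdir (i2 (fst p)) (snd p))"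
    using lsc_right[where \<phi>="\<lambda>c z. pdir (i2 c) z", OF a' b'] by simp
qed

lemma cf: "continuous_map A C f" using mf unfolding mor_def by blast

lemma lsc_phi1: "lsc (prod_topology S A) (\<lambda>p. pdir (fst p) (pside (fst p) (snd p)))"
proof (rule lsc_left[where \<phi>="\<lambda>z a. pdir z (pside z a)", simplified])
  show "lsc (prod_topology C A) (\<lambda>p. dC (fst p) (f (snd p)))"
    by (rule lsc_via[OF MC]) (auto intro: continuous_map_fst continuous_map_compose[OF continuous_map_snd cf, unfolded o_def])
  show "lsc (prod_topology B A) (\<lambda>p. dB (fst p) (m (snd p)))"
    by (rule lsc_via[OF MB]) (auto intro: continuous_map_fst continuous_map_compose[OF continuous_map_snd cm, unfolded o_def])
qed

lemma lsc_phi3: "lsc (prod_topology A S) (\<lambda>p. pdir (pside (snd p) (fst p)) (snd p))"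
proof (rule lsc_right[where \<phi>="\<lambda>a w. pdir (pside w a) w", simplified])
  show "lsc (prod_topology A C) (\<lambda>p. dC (f (fst p)) (snd p))"
    by (rule lsc_via[OF MC]) (auto intro: continuous_map_snd continuous_map_compose[OF continuous_map_fst cf, unfolded o_def])
  show "lsc (prod_topology A B) (\<lambda>p. dB (m (fst p)) (snd p))"
    by (rule lsc_via[OF MB]) (auto intro: continuous_map_snd continuous_map_compose[OF continuous_map_fst cm, unfolded o_def])
qed

lemma lsc_mid: "lsc (prod_topology A A) (\<lambda>p. dC (f (fst p)) (f (snd p)))"
  by (rule lsc_via[OF MC]) (auto intro: continuous_map_compose[OF continuous_map_fst cf, unfolded o_def]
        continuous_map_compose[OF continuous_map_snd cf, unfolded o_def])

lemma lsc_pterm: "lsc (prod_topology (prod_topology S S) (prod_topology A A))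
     (\<lambda>r. pterm (fst (fst r)) (snd (fst r)) (snd r))"
proof -
  have g1: "continuous_map (prod_topology (prod_topology S S) (prod_topology A A)) (prod_topology S A)
     (\<lambda>r. (fst (fst r), fst (snd r)))" by (intro continuous_map_pairedI cont_ff cont_fs)
  have g3: "continuous_map (prod_topology (prod_topology S S) (prod_topology A A)) (prod_topology A S)
     (\<lambda>r. (snd (snd r), snd (fst r)))" by (intro continuous_map_pairedI cont_ss cont_sf)
  have g2: "continuous_map (prod_topology (prod_topology S S) (prod_topology A A)) (prod_topology A A)
     (\<lambda>r. snd r)" by (rule continuous_map_snd)
  have "lsc (prod_topology (prod_topology S S) (prod_topology A A))
     (\<lambda>r. pdir (fst (fst r)) (pside (fst (fst r)) (fst (snd r))) + dC (f (fst (snd r))) (f (snd (snd r)))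
        + pdir (pside (snd (fst r)) (snd (snd r))) (snd (fst r)))"
    using lsc_add[OF lsc_add[OF lsc_compose[OF g1 lsc_phi1] lsc_compose[OF g2 lsc_mid]] lsc_compose[OF g3 lsc_phi3]]
    by simp
  then show ?thesis by (rule lsc_cong) (simp add: pterm_def)
qed

lemma lsc_pd: "lsc (prod_topology S S) (\<lambda>p. pd (fst p) (snd p))"
proof -
  have K: "compactin (prod_topology A A) (topspace A \<times> topspace A)"
    using MA unfolding MetCH_sep_def
    by (metis compact_space_def compact_space_prod_topology topspace_prod_topology)
  have "lsc (prod_topology S S) (\<lambda>q. INF p\<in>topspace A \<times> topspace A. pterm (fst q) (snd q) p)"
    using lsc_INF[where \<Phi>="\<lambda>q p. pterm (fst q) (snd q) p", OF _ K] lsc_pterm by simp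
  from lsc_min[OF lsc_pdir this] show ?thesis unfolding pd_def by simp
qed

lemma compact_X: "compact_space S"
  using compact_S MB MC unfolding MetCH_sep_def by blast

lemma haus_X: "Hausdorff_space S"
  using haus_S MB MC unfolding MetCH_sep_def by blast

lemma pmet_pd: "pmet S pd"
  by unfold_locales (use compact_X haus_X pd_refl pd_tri lsc_pd in auto)

lemma pd_C: assumes "c \<in> topspace C" "c' \<in> topspace C" shows "pd (i1 c) (i1 c') = dC c c'"
proof (rule antisym)
  show "pd (i1 c) (i1 c') \<le> dC c c'" using pd_le_dir[of "i1 c" "i1 c'"] by simp
  have "dC c c' \<le> (INF p\<in>topspace A \<times> topspace A. pterm (i1 c) (i1 c') p)"
  proof (rule INF_greatest)
    fix p assume p: "p \<in> topspace A \<times> topspace A"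
    have "dC c c' \<le> dC c (f (fst p)) + dC (f (fst p)) c'" using dC_tri assms fC p by auto
    also have "dC (f (fst p)) c' \<le> dC (f (fst p)) (f (snd p)) + dC (f (snd p)) c'" using dC_tri assms fC p by auto
    finally show "dC c c' \<le> pterm (i1 c) (i1 c') p" unfolding pterm_def by (simp add: add_mono ac_simps)
  qed
  then show "dC c c' \<le> pd (i1 c) (i1 c')" unfolding pd_def by simp
qed

lemma pd_B: "pd (i2 b) (i2 b') \<le> dB b b'"
  using pd_le_dir[of "i2 b" "i2 b'"] by simp

lemma pd_glue: assumes a: "a \<in> topspace A"
  shows "pd (i2 (m a)) (i1 (f a)) = 0" "pd (i1 (f a)) (i2 (m a)) = 0"
proof -
  have "pd (i2 (m a)) (i1 (f a)) \<le> pterm (i2 (m a)) (i1 (f a)) (a, a)"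
    using pd_le_P[of "i2 (m a)" "i1 (f a)"] a order.trans INF_lower[of "(a,a)" "topspace A \<times> topspace A"] by blast
  also have "\<dots> = 0" unfolding pterm_def using a dB_refl dC_refl mB fC by simp
  finally show "pd (i2 (m a)) (i1 (f a)) = 0" by simp
  have "pd (i1 (f a)) (i2 (m a)) \<le> pterm (i1 (f a)) (i2 (m a)) (a, a)"
    using pd_le_P[of "i1 (f a)" "i2 (m a)"] a order.trans INF_lower[of "(a,a)" "topspace A \<times> topspace A"] by blast
  also have "\<dots> = 0" unfolding pterm_def using a dB_refl dC_refl mB fC by simp
  finally show "pd (i1 (f a)) (i2 (m a)) = 0" by simp
qed

lemma pd_zero_CB:
  assumes c: "c \<in> topspace C" and b: "b \<in> topspace B" and z: "pd (i1 c) (i2 b) = 0"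
  shows "\<exists>a\<in>topspace A. \<exists>a'\<in>topspace A. dC c (f a) = 0 \<and> dC (f a) (f a') = 0 \<and> dB (m a') b = 0"
proof (rule ccontr)
  assume nex: "\<not> ?thesis"
  have K: "compactin (prod_topology A A) (topspace A \<times> topspace A)"
    using MA unfolding MetCH_sep_def
    by (metis compact_space_def compact_space_prod_topology topspace_prod_topology)
  have l: "lsc (prod_topology A A) (\<lambda>p. pterm (i1 c) (i2 b) p)"
  proof -
    have "lsc (prod_topology A A) (\<lambda>p. dC c (f (fst p)) + dC (f (fst p)) (f (snd p)) + dB (m (snd p)) b)"
      by (intro lsc_add lsc_mid lsc_via[OF MC] lsc_via[OF MB])
         (auto intro: continuous_map_compose[OF continuous_map_fst cf, unfolded o_def]
            continuous_map_compose[OF continuous_map_snd cm, unfolded o_def] c b)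
    then show ?thesis by (rule lsc_cong) (simp add: pterm_def)
  qed
  have "\<forall>p\<in>topspace A \<times> topspace A. 0 < pterm (i1 c) (i2 b) p"
    using nex by (auto simp: pterm_def zero_less_iff_neq_zero)
  then have "0 < (INF p\<in>topspace A \<times> topspace A. pterm (i1 c) (i2 b) p)"
    by (rule INF_pos[OF l K])
  then show False using z unfolding pd_def by simp
qed

end


context pushsetup
begin

lemma E1: "MetCH_sep (qtop S pd) pd"
proof -
  interpret Q: pmet S pd by (rule pmet_pd)
  show ?thesis by (rule Q.Q_MetCH)
qed

lemma E2k: "mor C dC (qtop S pd) pd (\<lambda>c. qrep S pd (i1 c))"
proof -
  interpret Q: pmet S pd by (rule pmet_pd)
  show ?thesis unfolding mor_def
  proof (intro conjI ballI)
    show "continuous_map C (qtop S pd) (\<lambda>c. qrep S pd (i1 c))"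
      using continuous_map_compose[OF cont_i1 Q.cont_rep] by (simp add: o_def)
    fix x y assume "x \<in> topspace C" "y \<in> topspace C"
    then show "pd (qrep S pd (i1 x)) (qrep S pd (i1 y)) \<le> dC x y"
      using Q.delta_rep pd_C topspace_S by auto
  qed
qed

lemma E2h: "mor B dB (qtop S pd) pd (\<lambda>b. qrep S pd (i2 b))"
proof -
  interpret Q: pmet S pd by (rule pmet_pd)
  show ?thesis unfolding mor_def
  proof (intro conjI ballI)
    show "continuous_map B (qtop S pd) (\<lambda>b. qrep S pd (i2 b))"
      using continuous_map_compose[OF cont_i2 Q.cont_rep] by (simp add: o_def)
    fix x y assume "x \<in> topspace B" "y \<in> topspace B"
    then show "pd (qrep S pd (i2 x)) (qrep S pd (i2 y)) \<le> dB x y"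
      using Q.delta_rep pd_B topspace_S by auto
  qed
qed

lemma E3: "a \<in> topspace A \<Longrightarrow> qrep S pd (i2 (m a)) = qrep S pd (i1 (f a))"
proof -
  interpret Q: pmet S pd by (rule pmet_pd)
  assume a: "a \<in> topspace A"
  show ?thesis
    by (rule Q.rep_eq) (use a pd_glue mB fC topspace_S in \<open>auto simp: sim_def\<close>)
qed

lemma E4: "c \<in> topspace C \<Longrightarrow> c' \<in> topspace C \<Longrightarrow> pd (qrep S pd (i1 c)) (qrep S pd (i1 c')) = dC c c'"
proof -
  interpret Q: pmet S pd by (rule pmet_pd)
  assume "c \<in> topspace C" "c' \<in> topspace C"
  then show ?thesis using Q.delta_rep pd_C topspace_S by auto
qed

lemma E5:
  assumes c: "c \<in> topspace C" and b: "b \<in> topspace B" and e: "qrep S pd (i2 b) = qrep S pd (i1 c)"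
  shows "\<exists>a\<in>topspace A. \<exists>a'\<in>topspace A. dC c (f a) = 0 \<and> dC (f a) (f a') = 0 \<and> dB (m a') b = 0"
proof -
  interpret Q: pmet S pd by (rule pmet_pd)
  have "sim pd (i2 b) (i1 c)" using Q.rep_eq_iff e b c topspace_S by auto
  then have "pd (i1 c) (i2 b) = 0" by (simp add: sim_def)
  then show ?thesis using pd_zero_CB c b by blast
qed

end

lemma disc_MetCH:
  assumes "finite T" "\<And>x. x \<in> T \<Longrightarrow> d x x = 0"
    "\<And>x y z. x \<in> T \<Longrightarrow> y \<in> T \<Longrightarrow> z \<in> T \<Longrightarrow> d x z \<le> d x y + d y z"
    "\<And>x y. x \<in> T \<Longrightarrow> y \<in> T \<Longrightarrow> d x y = 0 \<Longrightarrow> d y x = 0 \<Longrightarrow> x = y"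
  shows "MetCH_sep (discrete_topology T) d"
  unfolding MetCH_sep_def
  using assms by (auto simp: compact_space_discrete_topology prod_topology_discrete_topology[symmetric])

lemma eq_mono:
  fixes A :: "'a topology" and B :: "'b topology" and E :: "'e topology"
  assumes MA: "MetCH_sep A dA" and MB: "MetCH_sep B dB"
    and eq: "is_equalizer TYPE('a + 'b) A dA B dB E dE m p q"
  shows "inj_on m (topspace A)" "\<And>a a'. a \<in> topspace A \<Longrightarrow> a' \<in> topspace A \<Longrightarrow> dA a a' \<le> dB (m a) (m a')"
proof -
  have eqd: "mor A dA B dB m \<and> mor B dB E dE p \<and> mor B dB E dE q \<and>
     (\<forall>a\<in>topspace A. p (m a) = q (m a)) \<and>
     (\<forall>(W::('a + 'b) topology) dW w.
        MetCH_sep W dW \<and> mor W dW B dB w \<and> (\<forall>x\<in>topspace W. p (w x) = q (w x)) \<longrightarrow>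
        (\<exists>v. mor W dW A dA v \<and> (\<forall>x\<in>topspace W. m (v x) = w x)) \<and>
        (\<forall>v v'. mor W dW A dA v \<and> (\<forall>x\<in>topspace W. m (v x) = w x) \<and>
                mor W dW A dA v' \<and> (\<forall>x\<in>topspace W. m (v' x) = w x) \<longrightarrow>
                (\<forall>x\<in>topspace W. v x = v' x)))"
    using eq unfolding is_equalizer_def .
  have mm: "mor A dA B dB m" using eqd by (rule conjunct1)
  have pq: "\<forall>a\<in>topspace A. p (m a) = q (m a)" using eqd by (elim conjE)
  have U0: "\<forall>(W::('a + 'b) topology) dW w.
        MetCH_sep W dW \<and> mor W dW B dB w \<and> (\<forall>x\<in>topspace W. p (w x) = q (w x)) \<longrightarrow>
        (\<exists>v. mor W dW A dA v \<and> (\<forall>x\<in>topspace W. m (v x) = w x)) \<and>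
        (\<forall>v v'. mor W dW A dA v \<and> (\<forall>x\<in>topspace W. m (v x) = w x) \<and>
                mor W dW A dA v' \<and> (\<forall>x\<in>topspace W. m (v' x) = w x) \<longrightarrow>
                (\<forall>x\<in>topspace W. v x = v' x))" using eqd by (elim conjE)
  have Uex: "\<exists>v. mor W dW A dA v \<and> (\<forall>x\<in>topspace W. m (v x) = w x)"
    if "MetCH_sep W dW" "mor W dW B dB w" "\<forall>x\<in>topspace W. p (w x) = q (w x)"
    for W :: "('a + 'b) topology" and dW w
  proof -
    have "MetCH_sep W dW \<and> mor W dW B dB w \<and> (\<forall>x\<in>topspace W. p (w x) = q (w x))"
      by (rule conjI[OF that(1) conjI[OF that(2) that(3)]])
    from mp[OF U0[THEN spec[of _ W], THEN spec[of _ dW], THEN spec[of _ w]] this]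
    show ?thesis by (rule conjunct1)
  qed
  have Uun: "v x = v' x"
    if "MetCH_sep W dW" "mor W dW B dB w" "\<forall>x\<in>topspace W. p (w x) = q (w x)"
      "mor W dW A dA v" "\<forall>x\<in>topspace W. m (v x) = w x"
      "mor W dW A dA v'" "\<forall>x\<in>topspace W. m (v' x) = w x" "x \<in> topspace W"
    for W :: "('a + 'b) topology" and dW w v v' x
  proof -
    have h: "MetCH_sep W dW \<and> mor W dW B dB w \<and> (\<forall>x\<in>topspace W. p (w x) = q (w x))"
      by (rule conjI[OF that(1) conjI[OF that(2) that(3)]])
    have "\<forall>v v'. mor W dW A dA v \<and> (\<forall>x\<in>topspace W. m (v x) = w x) \<and>
                mor W dW A dA v' \<and> (\<forall>x\<in>topspace W. m (v' x) = w x) \<longrightarrow>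
                (\<forall>x\<in>topspace W. v x = v' x)"
      using mp[OF U0[THEN spec[of _ W], THEN spec[of _ dW], THEN spec[of _ w]] h] by (rule conjunct2)
    then have "mor W dW A dA v \<and> (\<forall>x\<in>topspace W. m (v x) = w x) \<and>
                mor W dW A dA v' \<and> (\<forall>x\<in>topspace W. m (v' x) = w x) \<longrightarrow>
                (\<forall>x\<in>topspace W. v x = v' x)" by (elim allE[of _ v] allE[of _ v'])
    moreover have "mor W dW A dA v \<and> (\<forall>x\<in>topspace W. m (v x) = w x) \<and>
                mor W dW A dA v' \<and> (\<forall>x\<in>topspace W. m (v' x) = w x)"
      using that(4-7) by (intro conjI)
    ultimately have "\<forall>x\<in>topspace W. v x = v' x" by (rule mp)
    then show ?thesis using that(8) by (rule bspec)
  qed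
  have mB: "\<And>a. a \<in> topspace A \<Longrightarrow> m a \<in> topspace B" using mm unfolding mor_def continuous_map_def by auto
  have dBr: "\<And>x. x \<in> topspace B \<Longrightarrow> dB x x = 0" using MB unfolding MetCH_sep_def by blast
  have dAr: "\<And>x. x \<in> topspace A \<Longrightarrow> dA x x = 0" using MA unfolding MetCH_sep_def by blast
  have dBt: "\<And>x y z. x \<in> topspace B \<Longrightarrow> y \<in> topspace B \<Longrightarrow> z \<in> topspace B \<Longrightarrow> dB x z \<le> dB x y + dB y z"
    using MB unfolding MetCH_sep_def by blast
  have dBs: "\<And>x y. x \<in> topspace B \<Longrightarrow> y \<in> topspace B \<Longrightarrow> dB x y = 0 \<Longrightarrow> dB y x = 0 \<Longrightarrow> x = y"
    using MB unfolding MetCH_sep_def by blast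
  define dW :: "'a + 'b \<Rightarrow> 'a + 'b \<Rightarrow> ennreal" where "dW x y = dB (m (projl x)) (m (projl y))" for x y
  define w :: "'a + 'b \<Rightarrow> 'b" where "w x = m (projl x)" for x
  have Wmor: "mor (discrete_topology (Inl ` T)) dW B dB w" if "T \<subseteq> topspace A" for T
    unfolding mor_def dW_def w_def using that mB by auto
  have Wpq: "\<forall>x\<in>topspace (discrete_topology (Inl ` T)). p (w x) = q (w x)" if "T \<subseteq> topspace A" for T
    unfolding w_def using that pq by auto
  show inj: "inj_on m (topspace A)"
  proof (rule inj_onI)
    fix a1 a2 assume a: "a1 \<in> topspace A" "a2 \<in> topspace A" "m a1 = m a2"
    let ?W = "discrete_topology (Inl ` {a1}) :: ('a + 'b) topology"
    have M: "MetCH_sep ?W dW" by (rule disc_MetCH) (auto simp: dW_def dBr mB a)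
    have T: "{a1} \<subseteq> topspace A" using a by simp
    have m1: "mor ?W dW A dA (\<lambda>x. a1)" "mor ?W dW A dA (\<lambda>x. a2)"
      unfolding mor_def using a dAr by auto
    have e1: "\<forall>x\<in>topspace ?W. m a1 = w x" "\<forall>x\<in>topspace ?W. m a2 = w x"
      using a unfolding w_def by auto
    have "(\<lambda>x. a1) (Inl a1) = (\<lambda>x. a2) (Inl a1)"
      by (rule Uun[OF M Wmor[OF T] Wpq[OF T] m1(1) e1(1) m1(2) e1(2)]) simp
    then show "a1 = a2" by simp
  qed
  fix a1 a2 assume a: "a1 \<in> topspace A" "a2 \<in> topspace A"
  let ?W = "discrete_topology (Inl ` {a1, a2}) :: ('a + 'b) topology"
  have T: "{a1, a2} \<subseteq> topspace A" using a by simp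
  have M: "MetCH_sep ?W dW"
  proof (rule disc_MetCH)
    fix x y assume xy: "x \<in> Inl ` {a1, a2}" "y \<in> Inl ` {a1, a2}" "dW x y = 0" "dW y x = 0"
    have px: "projl x \<in> topspace A" "projl y \<in> topspace A" using xy(1,2) a by auto
    have "m (projl x) = m (projl y)" using xy(3,4) dBs mB px unfolding dW_def by blast
    then have "projl x = projl y" using inj px unfolding inj_on_def by blast
    then show "x = y" using xy(1,2) by auto
  qed (use a dBr dBt mB in \<open>auto simp: dW_def\<close>)
  obtain v where v: "mor ?W dW A dA v" "\<forall>x\<in>topspace ?W. m (v x) = w x"
    using Uex[OF M Wmor[OF T] Wpq[OF T]] by blast
  have vA: "\<And>x. x \<in> topspace ?W \<Longrightarrow> v x \<in> topspace A" using v(1) unfolding mor_def continuous_map_def by auto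
  have vv1: "v (Inl a1) = a1"
  proof -
    have "m (v (Inl a1)) = m a1" using v(2) unfolding w_def by simp
    moreover have "v (Inl a1) \<in> topspace A" using vA by simp
    ultimately show ?thesis using inj a unfolding inj_on_def by blast
  qed
  have vv2: "v (Inl a2) = a2"
  proof -
    have "m (v (Inl a2)) = m a2" using v(2) unfolding w_def by simp
    moreover have "v (Inl a2) \<in> topspace A" using vA by simp
    ultimately show ?thesis using inj a unfolding inj_on_def by blast
  qed
  have "dA (v (Inl a1)) (v (Inl a2)) \<le> dW (Inl a1) (Inl a2)" using v(1) unfolding mor_def by simp
  then show "dA a1 a2 \<le> dB (m a1) (m a2)" using vv1 vv2 unfolding dW_def by simp
qed


theorem corollary4p7:
  fixes A :: "'a topology" and dA :: "'a \<Rightarrow> 'a \<Rightarrow> ennreal"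
    and B :: "'b topology" and dB :: "'b \<Rightarrow> 'b \<Rightarrow> ennreal"
    and C :: "'c topology" and dC :: "'c \<Rightarrow> 'c \<Rightarrow> ennreal"
    and D :: "'d topology" and dD :: "'d \<Rightarrow> 'd \<Rightarrow> ennreal"
    and E :: "'e topology" and dE :: "'e \<Rightarrow> 'e \<Rightarrow> ennreal"
    and m :: "'a \<Rightarrow> 'b" and p :: "'b \<Rightarrow> 'e" and q :: "'b \<Rightarrow> 'e"
    and f :: "'a \<Rightarrow> 'c" and g :: "'b \<Rightarrow> 'd" and n :: "'c \<Rightarrow> 'd"
  assumes "MetCH_sep A dA" and "MetCH_sep B dB" and "MetCH_sep C dC"
    and "MetCH_sep D dD" and "MetCH_sep E dE"
    and "is_equalizer TYPE('a + 'b) A dA B dB E dE m p q"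
    and "mor A dA C dC f"
    and "is_pushout TYPE(('b + 'c) + 'd) A dA B dB C dC D dD m f g n"
  shows "\<exists>(F :: ('d + 'd) topology) dF p' q'. MetCH_sep F dF \<and>
           is_equalizer TYPE('w) C dC D dD F dF n p' q'"
proof -
  note MA = assms(1) and MB = assms(2) and MC = assms(3) and MD = assms(4)
  have isoA: "\<And>a a'. a \<in> topspace A \<Longrightarrow> a' \<in> topspace A \<Longrightarrow> dA a a' \<le> dB (m a) (m a')"
    using eq_mono[OF MA MB assms(6)] by blast
  have mm: "mor A dA B dB m" using assms(6) unfolding is_equalizer_def by blast
  have mf: "mor A dA C dC f" by (rule assms(7))
  have po: "mor C dC D dD n"
    and PU: "\<And>(Z::(('b + 'c) + 'd) topology) dZ h k. MetCH_sep Z dZ \<Longrightarrow> mor B dB Z dZ h \<Longrightarrow> mor C dC Z dZ k \<Longrightarrow>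
        (\<forall>a\<in>topspace A. h (m a) = k (f a)) \<Longrightarrow>
        (\<exists>u. mor D dD Z dZ u \<and> (\<forall>b\<in>topspace B. u (g b) = h b) \<and> (\<forall>c\<in>topspace C. u (n c) = k c))"
    using assms(8) unfolding is_pushout_def by blast+
  interpret P: pushsetup "\<lambda>c. Inl (Inr c) :: ('b + 'c) + 'd" C "\<lambda>b. Inl (Inl b) :: ('b + 'c) + 'd" B A dA dB dC m f
  proof unfold_locales
    show "inj (\<lambda>c. Inl (Inr c) :: ('b + 'c) + 'd)" by (auto simp: inj_def)
    show "inj (\<lambda>b. Inl (Inl b) :: ('b + 'c) + 'd)" by (auto simp: inj_def)
    show "continuous_map A B m" using mm unfolding mor_def by blast
    fix a a' assume a: "a \<in> topspace A" "a' \<in> topspace A"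
    have "dC (f a) (f a') \<le> dA a a'" using mf a unfolding mor_def by blast
    also have "\<dots> \<le> dB (m a) (m a')" using isoA a by blast
    finally show "dC (f a) (f a') \<le> dB (m a) (m a')" .
  qed (use MA MB MC mf in auto)
  obtain u where u: "mor D dD (qtop P.S P.pd) P.pd u"
    "\<forall>c\<in>topspace C. u (n c) = qrep P.S P.pd (Inl (Inr c))"
    using PU[OF P.E1 P.E2h P.E2k] P.E3 by blast
  have nC: "\<And>c. c \<in> topspace C \<Longrightarrow> n c \<in> topspace D" using po unfolding mor_def continuous_map_def by auto
  have isoC: "dC c c' \<le> dD (n c) (n c')" if c: "c \<in> topspace C" "c' \<in> topspace C" for c c'
  proof -
    have "dC c c' = P.pd (qrep P.S P.pd (Inl (Inr c))) (qrep P.S P.pd (Inl (Inr c')))"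
      using P.E4 c by simp
    also have "\<dots> = P.pd (u (n c)) (u (n c'))" using u(2) c by simp
    also have "\<dots> \<le> dD (n c) (n c')" using u(1) nC c unfolding mor_def by blast
    finally show ?thesis .
  qed
  have dDr: "\<And>x. x \<in> topspace D \<Longrightarrow> dD x x = 0" using MD unfolding MetCH_sep_def by blast
  have dDt: "\<And>x y z. x \<in> topspace D \<Longrightarrow> y \<in> topspace D \<Longrightarrow> z \<in> topspace D \<Longrightarrow> dD x z \<le> dD x y + dD y z"
    using MD unfolding MetCH_sep_def by blast
  have dDs: "\<And>x y. x \<in> topspace D \<Longrightarrow> y \<in> topspace D \<Longrightarrow> dD x y = 0 \<Longrightarrow> dD y x = 0 \<Longrightarrow> x = y"
    using MD unfolding MetCH_sep_def by blast
  have dCs: "\<And>x y. x \<in> topspace C \<Longrightarrow> y \<in> topspace C \<Longrightarrow> dC x y = 0 \<Longrightarrow> dC y x = 0 \<Longrightarrow> x = y"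
    using MC unfolding MetCH_sep_def by blast
  have injn: "inj_on n (topspace C)"
  proof (rule inj_onI)
    fix c c' assume c: "c \<in> topspace C" "c' \<in> topspace C" "n c = n c'"
    have "dC c c' = 0" using isoC[of c c'] c dDr nC by simp
    moreover have "dC c' c = 0" using isoC[of c' c] c dDr nC by simp
    ultimately show "c = c'" using dCs c by blast
  qed
  interpret P2: pushsetup "Inl :: 'd \<Rightarrow> 'd + 'd" D "Inr :: 'd \<Rightarrow> 'd + 'd" D C dC dD dD n n
  proof unfold_locales
    show "continuous_map C D n" using po unfolding mor_def by blast
  qed (use MC MD po in auto)
  define F where "F = qtop P2.S P2.pd"
  define p' where "p' = (\<lambda>x. qrep P2.S P2.pd (Inl x))"
  define q' where "q' = (\<lambda>x. qrep P2.S P2.pd (Inr x))"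
  have MF: "MetCH_sep F P2.pd" unfolding F_def by (rule P2.E1)
  have nCD: "\<And>c. c \<in> topspace C \<Longrightarrow> n c \<in> topspace D" by (rule nC)
  have univ: "(\<exists>v. mor W dW C dC v \<and> (\<forall>x\<in>topspace W. n (v x) = w x)) \<and>
        (\<forall>v v'. mor W dW C dC v \<and> (\<forall>x\<in>topspace W. n (v x) = w x) \<and>
                mor W dW C dC v' \<and> (\<forall>x\<in>topspace W. n (v' x) = w x) \<longrightarrow>
                (\<forall>x\<in>topspace W. v x = v' x))"
    if H: "MetCH_sep W dW" "mor W dW D dD w" "\<forall>x\<in>topspace W. p' (w x) = q' (w x)"
    for W :: "'w topology" and dW w
  proof
    have wD: "\<And>x. x \<in> topspace W \<Longrightarrow> w x \<in> topspace D" using H(2) unfolding mor_def continuous_map_def by auto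
    have img: "w x \<in> n ` topspace C" if x: "x \<in> topspace W" for x
    proof -
      have "qrep P2.S P2.pd (Inr (w x)) = qrep P2.S P2.pd (Inl (w x))"
        using H(3) x unfolding p'_def q'_def by simp
      then obtain a a' where aa: "a \<in> topspace C" "a' \<in> topspace C" "dD (w x) (n a) = 0"
        "dD (n a) (n a') = 0" "dD (n a') (w x) = 0"
        using P2.E5[of "w x" "w x"] wD x by blast
      have "dD (n a) (w x) \<le> dD (n a) (n a') + dD (n a') (w x)" using dDt nCD aa wD x by blast
      then have "dD (n a) (w x) = 0" using aa by simp
      then have "w x = n a" using dDs wD x nCD aa by blast
      then show ?thesis using aa by blast
    qed
    define v where "v x = inv_into (topspace C) n (w x)" for x
    have nv: "\<And>x. x \<in> topspace W \<Longrightarrow> n (v x) = w x" unfolding v_def using img by (simp add: f_inv_into_f)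
    have vC: "\<And>x. x \<in> topspace W \<Longrightarrow> v x \<in> topspace C" unfolding v_def using img by (simp add: inv_into_into)
    have cv: "continuous_map W C v"
      unfolding continuous_map_closedin
    proof (intro conjI allI impI)
      show "v \<in> topspace W \<rightarrow> topspace C" using vC by auto
      fix K assume K: "closedin C K"
      have "compactin C K" using K MC closedin_compact_space unfolding MetCH_sep_def by blast
      then have "compactin D (n ` K)" using po image_compactin unfolding mor_def by blast
      then have cl: "closedin D (n ` K)" using MD compactin_imp_closedin unfolding MetCH_sep_def by blast
      have "{x \<in> topspace W. v x \<in> K} = {x \<in> topspace W. w x \<in> n ` K}"
      proof (rule set_eqI, rule iffI)
        fix x assume "x \<in> {x \<in> topspace W. v x \<in> K}"
        then show "x \<in> {x \<in> topspace W. w x \<in> n ` K}" using nv by force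
      next
        fix x assume x: "x \<in> {x \<in> topspace W. w x \<in> n ` K}"
        then obtain k where k: "k \<in> K" "w x = n k" by auto
        have "k \<in> topspace C" using k K closedin_subset by blast
        then have "v x = k" unfolding v_def using k injn by (simp add: inv_into_f_f)
        then show "x \<in> {x \<in> topspace W. v x \<in> K}" using x k by auto
      qed
      then show "closedin W {x \<in> topspace W. v x \<in> K}"
        using closedin_continuous_map_preimage[OF _ cl] H(2) unfolding mor_def by auto
    qed
    have "mor W dW C dC v"
      unfolding mor_def
    proof (intro conjI ballI)
      show "continuous_map W C v" by (rule cv)
      fix x y assume xy: "x \<in> topspace W" "y \<in> topspace W"
      have "dC (v x) (v y) \<le> dD (n (v x)) (n (v y))" using isoC vC xy by blast
      also have "\<dots> = dD (w x) (w y)" using nv xy by simp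
      also have "\<dots> \<le> dW x y" using H(2) xy unfolding mor_def by blast
      finally show "dC (v x) (v y) \<le> dW x y" .
    qed
    then show "\<exists>v. mor W dW C dC v \<and> (\<forall>x\<in>topspace W. n (v x) = w x)" using nv by blast
  next
    show "\<forall>v v'. mor W dW C dC v \<and> (\<forall>x\<in>topspace W. n (v x) = w x) \<and>
                mor W dW C dC v' \<and> (\<forall>x\<in>topspace W. n (v' x) = w x) \<longrightarrow>
                (\<forall>x\<in>topspace W. v x = v' x)"
    proof (intro allI impI ballI)
      fix v v' x
      assume V: "mor W dW C dC v \<and> (\<forall>x\<in>topspace W. n (v x) = w x) \<and>
                mor W dW C dC v' \<and> (\<forall>x\<in>topspace W. n (v' x) = w x)" and x: "x \<in> topspace W"
      have "v x \<in> topspace C" "v' x \<in> topspace C" using V x unfolding mor_def continuous_map_def by auto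
      moreover have "n (v x) = n (v' x)" using V x by simp
      ultimately show "v x = v' x" using injn unfolding inj_on_def by blast
    qed
  qed
  have "is_equalizer TYPE('w) C dC D dD F P2.pd n p' q'"
    unfolding is_equalizer_def
  proof (intro conjI ballI allI impI)
    show "mor C dC D dD n" by (rule po)
    show "mor D dD F P2.pd p'" unfolding F_def p'_def by (rule P2.E2k)
    show "mor D dD F P2.pd q'" unfolding F_def q'_def by (rule P2.E2h)
    fix a assume "a \<in> topspace C"
    then show "p' (n a) = q' (n a)" unfolding p'_def q'_def using P2.E3 by simp
  qed (use univ in blast)+
  then show ?thesis using MF by blast
qed

end
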